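(* Let $A=\{v_1,v_2\}$, $B=\{v_3,v_4\}$, $C=\{v_5,v_6\}$, $D=\{v_7,v_8\}$ and let $V_1$ be the access structure on the participant set $Q=\{v_1,\dots,v_8\}$ induced by the Vamos matroid with dealer $v_1$ (as described in the context). Then for every secret sharing scheme $\Sigma$ for $V_1$ we have $\rho(\Sigma)\le \frac{19}{21}$, and consequently the information rate satisfies $\rho(V_1)\le \frac{19}{21}$.
   Context: The Vamos matroid on $Q=\{v_1,\dots,v_8\}=A\cup B\cup C\cup D$ (with $A,B,C,D$ as in the claim) is the matroid whose independent sets are all subsets of $Q$ of size at most $4$ except $A\cup B$, $A\cup C$, $B\cup C$, $B\cup D$, $C\cup D$. A circuit is a minimal dependent set. With dealer $d=v_1$, the access structure $V_1$ is taken on all eight elements of $Q$ (the dealer is treated as a participant who alone is qualified): a set $X\subseteq Q$ is qualified iff $d\in X$ or $X$ contains a set $Y\subseteq Q\setminus\{d\}$ such that $Y\cup\{d\}$ is a circuit. A secret sharing scheme for an access structure $\Gamma$ on a finite participant set $P$ is a family of jointly distributed discrete random variables: a secret $S$ and one share for each participant $x\in P$; for nonempty $X\subseteq P\cup\{S\}$, $H(X)$ denotes the joint Shannon entropy of the corresponding variables and $H(X|Y)=H(X\cup Y)-H(Y)$. It is required that $H(S|X)=0$ for every $X\in\Gamma$ and $H(S|X)=H(S)$ for every nonempty $X\subseteq P$ with $X\notin\Gamma$. The information rate of the scheme is $\rho(\Sigma)=\min_{x\in P} H(S)/H(\{x\})$ (here $P=Q$, including the dealer), and the information rate $\rho(\Gamma)$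 of the access structure is the supremum of $\rho(\Sigma)$ over all secret sharing schemes $\Sigma$ for $\Gamma$ (with $H(S)>0$). *)

theory Defs
  imports "HOL-Probability.Probability_Mass_Function" "HOL-Library.FuncSet"
    "HOL-Library.Extended_Real"
begin

text \<open>A family of jointly distributed discrete random variables indexed by 'i with
values in 'v is a probability mass function p on outcomes 'i => 'v; the variable with
index i is the projection to coordinate i.\<close>

definition entropy :: "('i \<Rightarrow> 'v) pmf \<Rightarrow> 'i set \<Rightarrow> real" where
  "entropy p X =
     (let q = map_pmf (\<lambda>\<omega>. restrict \<omega> X) p
      in - (\<Sum>y\<in>set_pmf q. pmf q y * log 2 (pmf q y)))"

definition cond_entropy :: "('i \<Rightarrow> 'v) pmf \<Rightarrow> 'i set \<Rightarrow> 'i set \<Rightarrow> real" where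
  "cond_entropy p X Y = entropy p (X \<union> Y) - entropy p Y"

definition ss_scheme :: "('i \<Rightarrow> 'v) pmf \<Rightarrow> 'i \<Rightarrow> 'i set \<Rightarrow> 'i set set \<Rightarrow> bool" where
  "ss_scheme p s P \<Gamma> \<longleftrightarrow>
     finite (set_pmf p) \<and> s \<notin> P \<and>
     (\<forall>X\<in>\<Gamma>. cond_entropy p {s} X = 0) \<and>
     (\<forall>X. X \<subseteq> P \<and> X \<noteq> {} \<and> X \<notin> \<Gamma> \<longrightarrow> cond_entropy p {s} X = entropy p {s})"

definition scheme_rate :: "('i \<Rightarrow> 'v) pmf \<Rightarrow> 'i \<Rightarrow> 'i set \<Rightarrow> ereal" where
  "scheme_rate p s P =
     (INF x\<in>P. if entropy p {x} = 0 then \<infinity> else ereal (entropy p {s} / entropy p {x}))"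

definition access_rate :: "nat \<Rightarrow> nat set \<Rightarrow> nat set set \<Rightarrow> ereal" where
  "access_rate s P \<Gamma> =
     (SUP p\<in>{p :: (nat \<Rightarrow> nat) pmf. ss_scheme p s P \<Gamma> \<and> entropy p {s} > 0}.
        scheme_rate p s P)"

text \<open>v_i is represented by the natural number i; index 0 is the secret.\<close>

definition vQ :: "nat set" where "vQ = {1..8}"
definition vA :: "nat set" where "vA = {1,2}"
definition vB :: "nat set" where "vB = {3,4}"
definition vC :: "nat set" where "vC = {5,6}"
definition vD :: "nat set" where "vD = {7,8}"

definition vamos_indep :: "nat set \<Rightarrow> bool" where
  "vamos_indep X \<longleftrightarrow> X \<subseteq> vQ \<and> card X \<le> 4 \<and>
     X \<notin> {vA \<union> vB, vA \<union> vC, vB \<union> vC, vB \<union> vD, vC \<union> vD}"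

definition vamos_circuit :: "nat set \<Rightarrow> bool" where
  "vamos_circuit X \<longleftrightarrow> X \<subseteq> vQ \<and> \<not> vamos_indep X \<and> (\<forall>Y. Y \<subset> X \<longrightarrow> vamos_indep Y)"

definition vdealer :: nat where "vdealer = 1"

definition V1 :: "nat set set" where
  "V1 = {X. X \<subseteq> vQ \<and> (vdealer \<in> X \<or>
           (\<exists>Y. Y \<subseteq> vQ - {vdealer} \<and> Y \<subseteq> X \<and> vamos_circuit (Y \<union> {vdealer})))}"

end

theory Submission
  imports Defs
begin


definition Pc :: "'a pmf \<Rightarrow> ('a \<Rightarrow> 'b) \<Rightarrow> 'a \<Rightarrow> real" where
  "Pc p h w = (\<Sum>w'\<in>{w'\<in>set_pmf p. h w' = h w}. pmf p w')"

definition Hh :: "'a pmf \<Rightarrow> ('a \<Rightarrow> 'b) \<Rightarrow> real" where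
  "Hh p h = - (\<Sum>w\<in>set_pmf p. pmf p w * log 2 (Pc p h w))"

definition HH :: "'a pmf \<Rightarrow> ('a \<Rightarrow> 'b) \<Rightarrow> real" where
  "HH p h = (let q = map_pmf h p in - (\<Sum>y\<in>set_pmf q. pmf q y * log 2 (pmf q y)))"

lemma entropy_HH: "entropy p X = HH p (\<lambda>w. restrict w X)"
  unfolding entropy_def HH_def by simp

lemma HH_map: "HH (map_pmf m p) h = HH p (\<lambda>x. h (m x))"
  unfolding HH_def by (simp add: map_pmf_comp)

lemma measure_fin:
  assumes "finite (set_pmf p)"
  shows "measure_pmf.prob p A = (\<Sum>w\<in>{w\<in>set_pmf p. w \<in> A}. pmf p w)"
proof -
  have "measure_pmf.prob p A = measure_pmf.prob p (A \<inter> set_pmf p)"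
    by (simp add: measure_Int_set_pmf)
  also have "\<dots> = (\<Sum>w\<in>A \<inter> set_pmf p. pmf p w)"
    using assms by (intro measure_measure_pmf_finite) auto
  also have "A \<inter> set_pmf p = {w\<in>set_pmf p. w \<in> A}" by auto
  finally show ?thesis .
qed

lemma Pc_pos:
  assumes "finite (set_pmf p)" "w \<in> set_pmf p"
  shows "Pc p h w > 0"
proof -
  have "0 < pmf p w" using assms by (simp add: pmf_positive)
  also have "pmf p w \<le> Pc p h w"
    unfolding Pc_def using assms
    by (intro member_le_sum) (auto simp: pmf_nonneg)
  finally show ?thesis .
qed

lemma pmf_map_Pc:
  assumes "finite (set_pmf p)"
  shows "pmf (map_pmf h p) (h w) = Pc p h w"
  unfolding pmf_map Pc_def using measure_fin[OF assms, of "h -` {h w}"] by simp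

lemma HH_Hh:
  assumes fin: "finite (set_pmf p)"
  shows "HH p h = Hh p h"
proof -
  let ?S = "set_pmf p"
  have "(\<Sum>y\<in>set_pmf (map_pmf h p). pmf (map_pmf h p) y * log 2 (pmf (map_pmf h p) y))
      = (\<Sum>y\<in>h ` ?S. \<Sum>w\<in>{w\<in>?S. h w = y}. pmf p w * log 2 (Pc p h w))"
  proof (rule sum.cong)
    fix y assume y: "y \<in> h ` ?S"
    then obtain w0 where w0: "w0 \<in> ?S" "y = h w0" by auto
    have py: "pmf (map_pmf h p) y = (\<Sum>w\<in>{w\<in>?S. h w = y}. pmf p w)"
      using pmf_map_Pc[OF fin, of h w0] w0 unfolding Pc_def by simp
    have "(\<Sum>w\<in>{w\<in>?S. h w = y}. pmf p w * log 2 (Pc p h w))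
        = (\<Sum>w\<in>{w\<in>?S. h w = y}. pmf p w * log 2 (pmf (map_pmf h p) y))"
      by (intro sum.cong refl) (metis (mono_tags, lifting) mem_Collect_eq pmf_map_Pc[OF fin])
    also have "\<dots> = pmf (map_pmf h p) y * log 2 (pmf (map_pmf h p) y)"
      by (simp add: py sum_distrib_right)
    finally show "pmf (map_pmf h p) y * log 2 (pmf (map_pmf h p) y) =
        (\<Sum>w\<in>{w\<in>?S. h w = y}. pmf p w * log 2 (Pc p h w))" by (rule sym)
  qed simp
  also have "\<dots> = (\<Sum>w\<in>?S. pmf p w * log 2 (Pc p h w))"
    by (rule sum.image_gen[symmetric]) (rule fin)
  finally show ?thesis unfolding HH_def Hh_def by simp
qed

lemma Pc_cong:
  assumes "\<And>w'. w' \<in> set_pmf p \<Longrightarrow> (h1 w' = h1 w) \<longleftrightarrow> (h2 w' = h2 w)"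
  shows "Pc p h1 w = Pc p h2 w"
  unfolding Pc_def using assms by (intro sum.cong) auto

lemma Hh_cong:
  assumes "\<And>w w'. w \<in> set_pmf p \<Longrightarrow> w' \<in> set_pmf p \<Longrightarrow> (h1 w' = h1 w) \<longleftrightarrow> (h2 w' = h2 w)"
  shows "Hh p h1 = Hh p h2"
proof -
  have "\<And>w. w \<in> set_pmf p \<Longrightarrow> Pc p h1 w = Pc p h2 w"
    using assms by (intro Pc_cong) auto
  then show ?thesis unfolding Hh_def by simp
qed

lemma sum_pmf_S: "finite (set_pmf p) \<Longrightarrow> (\<Sum>w\<in>set_pmf p. pmf p w) = 1"
  by (rule sum_pmf_eq_1) auto

lemma log2_le: "x > 0 \<Longrightarrow> log 2 x \<le> (x - 1) / ln 2"
proof -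
  assume x: "x > 0"
  have "ln x \<le> x - 1" using x by (rule ln_le_minus_one)
  moreover have "ln 2 > (0::real)" by simp
  ultimately show ?thesis unfolding log_def by (simp add: divide_right_mono)
qed

lemma Pc_if:
  assumes "finite (set_pmf p)"
  shows "Pc p h w = (\<Sum>w'\<in>set_pmf p. if h w' = h w then pmf p w' else 0)"
  unfolding Pc_def using assms by (simp add: sum.inter_filter)

lemma Pc_eq: "h w' = h w \<Longrightarrow> Pc p h w' = Pc p h w"
  unfolding Pc_def by simp

lemma Pc_nonneg: "Pc p h w \<ge> 0"
  unfolding Pc_def by (intro sum_nonneg) (simp add: pmf_nonneg)

lemma cmi_key:
  fixes f :: "'a \<Rightarrow> 'b" and g :: "'a \<Rightarrow> 'c" and k :: "'a \<Rightarrow> 'd"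
  assumes fin: "finite (set_pmf p)"
  shows "(\<Sum>w\<in>set_pmf p. pmf p w * (Pc p (\<lambda>w. (f w, k w)) w * Pc p (\<lambda>w. (g w, k w)) w)
            / (Pc p (\<lambda>w. (f w, g w, k w)) w * Pc p k w)) \<le> 1"
proof -
  let ?S = "set_pmf p"
  let ?p = "pmf p"
  let ?A = "Pc p (\<lambda>w. (f w, g w, k w))"
  let ?B = "Pc p k"
  let ?C = "Pc p (\<lambda>w. (f w, k w))"
  let ?D = "Pc p (\<lambda>w. (g w, k w))"
  define F where "F w w1 w2 = (if (f w1, k w1) = (f w, k w) \<and> (g w2, k w2) = (g w, k w)
      then ?p w * ?p w1 * ?p w2 / (?A w * ?B w) else 0)" for w w1 w2
  define E where "E w1 w2 = (\<Sum>w\<in>?S. if (f w, g w, k w) = (f w1, g w2, k w1) then ?p w / ?A w else 0)"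
    for w1 w2
  have step1: "?p w * (?C w * ?D w) / (?A w * ?B w) = (\<Sum>w1\<in>?S. \<Sum>w2\<in>?S. F w w1 w2)" for w
  proof -
    have "?C w * ?D w = (\<Sum>w1\<in>?S. \<Sum>w2\<in>?S. (if (f w1, k w1) = (f w, k w) then ?p w1 else 0) *
                   (if (g w2, k w2) = (g w, k w) then ?p w2 else 0))"
      by (simp add: Pc_if[OF fin] sum_product)
    then have "?p w * (?C w * ?D w) / (?A w * ?B w) =
       (\<Sum>w1\<in>?S. \<Sum>w2\<in>?S. ?p w * ((if (f w1, k w1) = (f w, k w) then ?p w1 else 0) *
                   (if (g w2, k w2) = (g w, k w) then ?p w2 else 0)) / (?A w * ?B w))"
      by (simp add: sum_distrib_left sum_divide_distrib)
    also have "\<dots> = (\<Sum>w1\<in>?S. \<Sum>w2\<in>?S. F w w1 w2)"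
      unfolding F_def by (intro sum.cong refl) auto
    finally show ?thesis .
  qed
  have E_le: "E w1 w2 \<le> 1" for w1 w2
  proof (cases "\<exists>w0\<in>?S. (f w0, g w0, k w0) = (f w1, g w2, k w1)")
    case False
    then have "E w1 w2 = 0" unfolding E_def by (intro sum.neutral) auto
    then show ?thesis by simp
  next
    case True
    then obtain w0 where w0: "w0 \<in> ?S" "(f w0, g w0, k w0) = (f w1, g w2, k w1)" by blast
    have "E w1 w2 = (\<Sum>w\<in>?S. if (f w, g w, k w) = (f w0, g w0, k w0) then ?p w / ?A w0 else 0)"
    proof -
      have Aeq: "\<And>w. (f w, g w, k w) = (f w0, g w0, k w0) \<Longrightarrow> ?A w = ?A w0"
        by (rule Pc_eq)
      show ?thesis unfolding E_def
      proof (intro sum.cong refl)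
        fix w
        show "(if (f w, g w, k w) = (f w1, g w2, k w1) then ?p w / ?A w else 0) =
          (if (f w, g w, k w) = (f w0, g w0, k w0) then ?p w / ?A w0 else 0)"
          using w0(2) Aeq[of w] by (cases "(f w, g w, k w) = (f w0, g w0, k w0)") auto
      qed
    qed
    also have "\<dots> = (\<Sum>w\<in>?S. if (f w, g w, k w) = (f w0, g w0, k w0) then ?p w else 0) / ?A w0"
      by (subst sum_divide_distrib) (intro sum.cong refl, simp)
    also have "\<dots> = ?A w0 / ?A w0"
      by (simp add: Pc_if[OF fin])
    also have "\<dots> = 1" using Pc_pos[OF fin w0(1), of "\<lambda>w. (f w, g w, k w)"] by simp
    finally show ?thesis by simp
  qed
  have E_nonneg: "E w1 w2 \<ge> 0" for w1 w2
    unfolding E_def by (intro sum_nonneg) (auto intro!: divide_nonneg_nonneg pmf_nonneg Pc_nonneg)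
  have step2: "(\<Sum>w\<in>?S. F w w1 w2) = (if k w1 = k w2 then ?p w1 * ?p w2 / ?B w1 * E w1 w2 else 0)"
    if w12: "w1 \<in> ?S" "w2 \<in> ?S" for w1 w2
  proof (cases "k w1 = k w2")
    case False
    then have "F w w1 w2 = 0" for w unfolding F_def by auto
    then show ?thesis using False by simp
  next
    case True
    have "F w w1 w2 = ?p w1 * ?p w2 / ?B w1 *
        (if (f w, g w, k w) = (f w1, g w2, k w1) then ?p w / ?A w else 0)" for w
    proof (cases "(f w, g w, k w) = (f w1, g w2, k w1)")
      case True2: True
      then have "?B w = ?B w1" by (intro Pc_eq) simp
      then show ?thesis unfolding F_def using True True2 by (auto simp: ac_simps)
    next
      case False
      then show ?thesis unfolding F_def using True by auto
    qed
    then have "(\<Sum>w\<in>?S. F w w1 w2) = ?p w1 * ?p w2 / ?B w1 * E w1 w2"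
      unfolding E_def by (simp add: sum_distrib_left)
    then show ?thesis using True by simp
  qed
  have "(\<Sum>w\<in>?S. ?p w * (?C w * ?D w) / (?A w * ?B w)) = (\<Sum>w\<in>?S. \<Sum>w1\<in>?S. \<Sum>w2\<in>?S. F w w1 w2)"
    using step1 by simp
  also have "\<dots> = (\<Sum>w1\<in>?S. \<Sum>w\<in>?S. \<Sum>w2\<in>?S. F w w1 w2)"
    by (rule sum.swap)
  also have "\<dots> = (\<Sum>w1\<in>?S. \<Sum>w2\<in>?S. \<Sum>w\<in>?S. F w w1 w2)"
    by (intro sum.cong refl sum.swap)
  also have "\<dots> = (\<Sum>w1\<in>?S. \<Sum>w2\<in>?S. if k w1 = k w2 then ?p w1 * ?p w2 / ?B w1 * E w1 w2 else 0)"
    using step2 by simp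
  also have "\<dots> \<le> (\<Sum>w1\<in>?S. \<Sum>w2\<in>?S. if k w2 = k w1 then ?p w1 / ?B w1 * ?p w2 else 0)"
  proof (intro sum_mono)
    fix w1 w2
    have "?p w1 * ?p w2 / ?B w1 * E w1 w2 \<le> ?p w1 * ?p w2 / ?B w1 * 1"
      by (intro mult_left_mono E_le divide_nonneg_nonneg mult_nonneg_nonneg pmf_nonneg Pc_nonneg)
    then show "(if k w1 = k w2 then ?p w1 * ?p w2 / ?B w1 * E w1 w2 else 0)
        \<le> (if k w2 = k w1 then ?p w1 / ?B w1 * ?p w2 else 0)" by auto
  qed
  also have "\<dots> = (\<Sum>w1\<in>?S. ?p w1 / ?B w1 * ?B w1)"
    by (intro sum.cong refl) (simp add: Pc_if[OF fin, of k] sum_distrib_left if_distrib cong: if_cong)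
  also have "\<dots> = (\<Sum>w1\<in>?S. ?p w1)"
    using Pc_pos[OF fin, of _ k] by (intro sum.cong refl) (metis less_irrefl nonzero_eq_divide_eq times_divide_eq_left)
  also have "\<dots> = 1" using sum_pmf_S[OF fin] .
  finally show ?thesis .
qed


lemma cmi_Hh:
  fixes f :: "'a \<Rightarrow> 'b" and g :: "'a \<Rightarrow> 'c" and k :: "'a \<Rightarrow> 'd"
  assumes fin: "finite (set_pmf p)"
  shows "Hh p (\<lambda>w. (f w, g w, k w)) + Hh p k \<le> Hh p (\<lambda>w. (f w, k w)) + Hh p (\<lambda>w. (g w, k w))"
proof -
  let ?S = "set_pmf p"
  let ?p = "pmf p"
  let ?A = "Pc p (\<lambda>w. (f w, g w, k w))"
  let ?B = "Pc p k"
  let ?C = "Pc p (\<lambda>w. (f w, k w))"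
  let ?D = "Pc p (\<lambda>w. (g w, k w))"
  have pt: "?p w * (log 2 (?C w) + log 2 (?D w) - log 2 (?A w) - log 2 (?B w))
      \<le> (?p w * (?C w * ?D w) / (?A w * ?B w) - ?p w) / ln 2" if w: "w \<in> ?S" for w
  proof -
    have pos: "?A w > 0" "?B w > 0" "?C w > 0" "?D w > 0" using Pc_pos[OF fin w] by auto
    have "log 2 (?C w) + log 2 (?D w) - log 2 (?A w) - log 2 (?B w) = log 2 (?C w * ?D w / (?A w * ?B w))"
      using pos by (simp add: log_mult log_divide)
    also have "\<dots> \<le> (?C w * ?D w / (?A w * ?B w) - 1) / ln 2"
      using pos by (intro log2_le) simp
    finally have "?p w * (log 2 (?C w) + log 2 (?D w) - log 2 (?A w) - log 2 (?B w))
        \<le> ?p w * ((?C w * ?D w / (?A w * ?B w) - 1) / ln 2)"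
      by (intro mult_left_mono pmf_nonneg)
    also have "\<dots> = (?p w * (?C w * ?D w) / (?A w * ?B w) - ?p w) / ln 2"
      by (simp add: right_diff_distrib diff_divide_distrib)
    finally show ?thesis .
  qed
  have "(\<Sum>w\<in>?S. ?p w * (log 2 (?C w) + log 2 (?D w) - log 2 (?A w) - log 2 (?B w)))
      \<le> (\<Sum>w\<in>?S. (?p w * (?C w * ?D w) / (?A w * ?B w) - ?p w) / ln 2)"
    using pt by (intro sum_mono) auto
  also have "\<dots> = ((\<Sum>w\<in>?S. ?p w * (?C w * ?D w) / (?A w * ?B w)) - (\<Sum>w\<in>?S. ?p w)) / ln 2"
    by (simp only: sum_divide_distrib[symmetric] sum_subtractf)
  also have "\<dots> \<le> 0"
    using cmi_key[OF fin, of f k g] sum_pmf_S[OF fin] by (intro divide_nonpos_pos) auto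
  finally have "(\<Sum>w\<in>?S. ?p w * (log 2 (?C w) + log 2 (?D w) - log 2 (?A w) - log 2 (?B w))) \<le> 0" .
  moreover have "(\<Sum>w\<in>?S. ?p w * (log 2 (?C w) + log 2 (?D w) - log 2 (?A w) - log 2 (?B w)))
     = (\<Sum>w\<in>?S. ?p w * log 2 (?C w)) + (\<Sum>w\<in>?S. ?p w * log 2 (?D w))
       - (\<Sum>w\<in>?S. ?p w * log 2 (?A w)) - (\<Sum>w\<in>?S. ?p w * log 2 (?B w))"
    by (simp add: right_diff_distrib distrib_left sum.distrib sum_subtractf)
  ultimately show ?thesis unfolding Hh_def by linarith
qed

lemma ci_Hh:
  fixes f :: "'a \<Rightarrow> 'b" and g :: "'a \<Rightarrow> 'c" and k :: "'a \<Rightarrow> 'd"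
  assumes fin: "finite (set_pmf p)"
  assumes eq: "\<And>w. w \<in> set_pmf p \<Longrightarrow> Pc p (\<lambda>w. (f w, g w, k w)) w * Pc p k w
      = Pc p (\<lambda>w. (f w, k w)) w * Pc p (\<lambda>w. (g w, k w)) w"
  shows "Hh p (\<lambda>w. (f w, g w, k w)) + Hh p k = Hh p (\<lambda>w. (f w, k w)) + Hh p (\<lambda>w. (g w, k w))"
proof -
  let ?S = "set_pmf p"
  let ?p = "pmf p"
  let ?A = "Pc p (\<lambda>w. (f w, g w, k w))"
  let ?B = "Pc p k"
  let ?C = "Pc p (\<lambda>w. (f w, k w))"
  let ?D = "Pc p (\<lambda>w. (g w, k w))"
  have "?p w * log 2 (?A w) + ?p w * log 2 (?B w) = ?p w * log 2 (?C w) + ?p w * log 2 (?D w)"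
    if w: "w \<in> ?S" for w
  proof -
    have pos: "?A w > 0" "?B w > 0" "?C w > 0" "?D w > 0" using Pc_pos[OF fin w] by auto
    have "log 2 (?A w) + log 2 (?B w) = log 2 (?A w * ?B w)" using pos by (simp add: log_mult)
    also have "\<dots> = log 2 (?C w * ?D w)" using eq[OF w] by simp
    also have "\<dots> = log 2 (?C w) + log 2 (?D w)" using pos by (simp add: log_mult)
    finally have "?p w * (log 2 (?A w) + log 2 (?B w)) = ?p w * (log 2 (?C w) + log 2 (?D w))" by (rule arg_cong)
    then show ?thesis by (simp only: distrib_left)
  qed
  then have "(\<Sum>w\<in>?S. ?p w * log 2 (?A w) + ?p w * log 2 (?B w)) = (\<Sum>w\<in>?S. ?p w * log 2 (?C w) + ?p w * log 2 (?D w))"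
    by (intro sum.cong refl) auto
  then show ?thesis unfolding Hh_def by (simp add: sum.distrib)
qed

lemma Hh_const: "finite (set_pmf p) \<Longrightarrow> Hh p (\<lambda>w. c) = 0"
  unfolding Hh_def Pc_def by (simp add: sum_pmf_S)

lemma ent_Hh: "finite (set_pmf p) \<Longrightarrow> entropy p X = Hh p (\<lambda>w. restrict w X)"
  by (simp add: entropy_HH HH_Hh)

lemma restrict_eq_iff: "(restrict w X = restrict w' X) \<longleftrightarrow> (\<forall>i\<in>X. w i = w' i)"
  by (auto simp: restrict_def fun_eq_iff)

lemma ent_submod:
  assumes fin: "finite (set_pmf p)"
  shows "entropy p (X \<union> Y) + entropy p (X \<inter> Y) \<le> entropy p X + entropy p Y"
proof -
  have 1: "Hh p (\<lambda>w. restrict w (X \<union> Y)) = Hh p (\<lambda>w. (restrict w X, restrict w Y, restrict w (X \<inter> Y)))"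
    by (rule Hh_cong) (auto simp: restrict_eq_iff)
  have 2: "Hh p (\<lambda>w. restrict w X) = Hh p (\<lambda>w. (restrict w X, restrict w (X \<inter> Y)))"
    by (rule Hh_cong) (auto simp: restrict_eq_iff)
  have 3: "Hh p (\<lambda>w. restrict w Y) = Hh p (\<lambda>w. (restrict w Y, restrict w (X \<inter> Y)))"
    by (rule Hh_cong) (auto simp: restrict_eq_iff)
  show ?thesis unfolding ent_Hh[OF fin] 1 2 3 by (rule cmi_Hh[OF fin])
qed

lemma ent_mono:
  assumes fin: "finite (set_pmf p)" and sub: "Y \<subseteq> X"
  shows "entropy p Y \<le> entropy p X"
proof -
  have 1: "Hh p (\<lambda>w. restrict w X) = Hh p (\<lambda>w. (restrict w X, restrict w X, restrict w Y))"
    using sub by (intro Hh_cong) (auto simp: restrict_eq_iff)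
  have 2: "Hh p (\<lambda>w. restrict w X) = Hh p (\<lambda>w. (restrict w X, restrict w Y))"
    using sub by (intro Hh_cong) (auto simp: restrict_eq_iff)
  have "Hh p (\<lambda>w. (restrict w X, restrict w X, restrict w Y)) + Hh p (\<lambda>w. restrict w Y)
     \<le> Hh p (\<lambda>w. (restrict w X, restrict w Y)) + Hh p (\<lambda>w. (restrict w X, restrict w Y))"
    by (rule cmi_Hh[OF fin])
  then show ?thesis unfolding ent_Hh[OF fin] using 1 2 by linarith
qed

lemma ent_empty: "finite (set_pmf p) \<Longrightarrow> entropy p {} = 0"
proof -
  have "(\<lambda>w::'a \<Rightarrow> 'b. restrict w {}) = (\<lambda>w. \<lambda>x. undefined)" by (auto simp: restrict_def)
  then show "finite (set_pmf p) \<Longrightarrow> entropy p {} = 0" by (simp add: ent_Hh Hh_const)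
qed




definition Jp :: "'a pmf \<Rightarrow> ('a \<Rightarrow> 'c) \<Rightarrow> ('a \<times> 'a) pmf" where
  "Jp p r = bind_pmf p (\<lambda>w. map_pmf (\<lambda>w'. (w, w')) (cond_pmf p {w'. r w' = r w}))"

lemma set_Jp: "x \<in> set_pmf (Jp p r) \<Longrightarrow> fst x \<in> set_pmf p \<and> snd x \<in> set_pmf p \<and> r (snd x) = r (fst x)"
proof -
  assume x: "x \<in> set_pmf (Jp p r)"
  then obtain w where w: "w \<in> set_pmf p" "x \<in> set_pmf (map_pmf (\<lambda>w'. (w, w')) (cond_pmf p {w'. r w' = r w}))"
    unfolding Jp_def by auto
  have ne: "set_pmf p \<inter> {w'. r w' = r w} \<noteq> {}" using w(1) by auto
  from w(2) show ?thesis using w(1) by (auto simp: set_cond_pmf[OF ne])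
qed

lemma fin_Jp: "finite (set_pmf p) \<Longrightarrow> finite (set_pmf (Jp p r))"
proof -
  assume "finite (set_pmf p)"
  then have "finite (set_pmf p \<times> set_pmf p)" by simp
  moreover have "set_pmf (Jp p r) \<subseteq> set_pmf p \<times> set_pmf p"
    using set_Jp by (metis mem_Times_iff subrelI)
  ultimately show ?thesis by (rule finite_subset[rotated])
qed

lemma fst_Jp: "map_pmf fst (Jp p r) = p"
  unfolding Jp_def map_bind_pmf map_pmf_comp by (simp add: bind_return_pmf')

lemma snd_Jp: "map_pmf snd (Jp p r) = p"
proof -
  have "map_pmf snd (Jp p r) = bind_pmf p (\<lambda>w. cond_pmf p {w'. r w = r w'})"
    unfolding Jp_def map_bind_pmf map_pmf_comp by (simp add: eq_commute)
  also have "\<dots> = p"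
  proof (rule bind_cond_pmf_cancel)
    fix x y assume "x \<in> set_pmf p" "y \<in> set_pmf p" "r x = r y"
    then show "measure_pmf.prob p {y. r x = r y} = measure_pmf.prob p {x. r x = r y}"
      by (metis (no_types, lifting))
  qed auto
  finally show ?thesis .
qed

lemma pmf_Jp:
  assumes fin: "finite (set_pmf p)"
  shows "pmf (Jp p r) (a, b) = pmf p a * (if r b = r a then pmf p b / Pc p r a else 0)"
proof (cases "a \<in> set_pmf p")
  case False
  then have "(a, b) \<notin> set_pmf (Jp p r)" using set_Jp by force
  then show ?thesis using False by (simp add: set_pmf_iff)
next
  case True
  have ne: "set_pmf p \<inter> {w'. r w' = r a} \<noteq> {}" using True by auto
  have "pmf (Jp p r) (a, b) = (\<integral>w. pmf (map_pmf (\<lambda>w'. (w, w')) (cond_pmf p {w'. r w' = r w})) (a, b) \<partial>p)"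
    unfolding Jp_def pmf_bind ..
  also have "\<dots> = (\<Sum>w\<in>set_pmf p. pmf p w *\<^sub>R pmf (map_pmf (\<lambda>w'. (w, w')) (cond_pmf p {w'. r w' = r w})) (a, b))"
    by (rule integral_measure_pmf[OF fin]) (auto simp: set_pmf_iff)
  also have "\<dots> = (\<Sum>w\<in>set_pmf p. if w = a then pmf p a * pmf (cond_pmf p {w'. r w' = r a}) b else 0)"
  proof (intro sum.cong refl)
    fix w assume "w \<in> set_pmf p"
    show "pmf p w *\<^sub>R pmf (map_pmf (\<lambda>w'. (w, w')) (cond_pmf p {w'. r w' = r w})) (a, b) =
      (if w = a then pmf p a * pmf (cond_pmf p {w'. r w' = r a}) b else 0)"
    proof (cases "w = a")
      case True
      have "pmf (map_pmf (Pair a) (cond_pmf p {w'. r w' = r a})) (Pair a b) = pmf (cond_pmf p {w'. r w' = r a}) b"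
        by (rule pmf_map_inj') (simp add: inj_on_def)
      then show ?thesis using True by simp
    next
      case False
      then have "pmf (map_pmf (\<lambda>w'. (w, w')) (cond_pmf p {w'. r w' = r w})) (a, b) = 0"
        by (intro pmf_map_outside) auto
      then show ?thesis using False by simp
    qed
  qed
  also have "\<dots> = pmf p a * pmf (cond_pmf p {w'. r w' = r a}) b"
    using True fin by (simp add: sum.delta)
  also have "\<dots> = pmf p a * (if r b = r a then pmf p b / Pc p r a else 0)"
    using measure_fin[OF fin, of "{w'. r w' = r a}"] by (simp add: pmf_cond[OF ne] Pc_def)
  finally show ?thesis .
qed

lemma Pc_superset:
  assumes "finite T" "set_pmf p \<subseteq> T"
  shows "Pc p h x = (\<Sum>x'\<in>T. if h x' = h x then pmf p x' else 0)"
proof -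
  have "Pc p h x = (\<Sum>x'\<in>{x'\<in>set_pmf p. h x' = h x}. pmf p x')" unfolding Pc_def ..
  also have "\<dots> = (\<Sum>x'\<in>{x'\<in>T. h x' = h x}. pmf p x')"
    using assms by (intro sum.mono_neutral_left) (auto simp: set_pmf_iff)
  also have "\<dots> = (\<Sum>x'\<in>T. if h x' = h x then pmf p x' else 0)"
    using assms by (simp add: sum.inter_filter)
  finally show ?thesis .
qed

lemma Pc_Jp:
  assumes fin: "finite (set_pmf p)" and ab: "(a, b) \<in> set_pmf (Jp p r)"
    and det: "\<And>w. u w = u a \<Longrightarrow> r w = r a"
  shows "Pc (Jp p r) (\<lambda>x. (u (fst x), v (snd x))) (a, b) = Pc p u a * Pc p (\<lambda>w. (r w, v w)) b / Pc p r a"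
proof -
  let ?S = "set_pmf p"
  have ab': "a \<in> ?S" "b \<in> ?S" "r b = r a" using set_Jp[OF ab] by auto
  have pos: "Pc p r a > 0" using Pc_pos[OF fin ab'(1)] .
  have "Pc (Jp p r) (\<lambda>x. (u (fst x), v (snd x))) (a, b) =
      (\<Sum>x'\<in>?S \<times> ?S. if (u (fst x'), v (snd x')) = (u a, v b) then pmf (Jp p r) x' else 0)"
  proof -
    have sub: "set_pmf (Jp p r) \<subseteq> ?S \<times> ?S" using set_Jp[of _ p r] by force
    show ?thesis using Pc_superset[OF _ sub, of "\<lambda>x. (u (fst x), v (snd x))" "(a, b)"] fin by simp
  qed
  also have "\<dots> = (\<Sum>w\<in>?S. \<Sum>w'\<in>?S. if (u w, v w') = (u a, v b) then pmf (Jp p r) (w, w') else 0)"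
    by (simp only: sum.cartesian_product) (rule sum.cong[OF refl], clarsimp)
  also have "\<dots> = (\<Sum>w\<in>?S. \<Sum>w'\<in>?S. (if u w = u a then pmf p w else 0) *
      (if (r w', v w') = (r b, v b) then pmf p w' else 0) / Pc p r a)"
  proof (intro sum.cong refl)
    fix w w' assume "w \<in> ?S" "w' \<in> ?S"
    show "(if (u w, v w') = (u a, v b) then pmf (Jp p r) (w, w') else 0) =
      (if u w = u a then pmf p w else 0) * (if (r w', v w') = (r b, v b) then pmf p w' else 0) / Pc p r a"
    proof (cases "u w = u a")
      case True
      then have rw: "r w = r a" by (rule det)
      then have "Pc p r w = Pc p r a" by (rule Pc_eq)
      then show ?thesis using True rw ab'(3) by (auto simp: pmf_Jp[OF fin])
    qed simp
  qed
  also have "\<dots> = (\<Sum>w\<in>?S. if u w = u a then pmf p w else 0) *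
      (\<Sum>w'\<in>?S. if (r w', v w') = (r b, v b) then pmf p w' else 0) / Pc p r a"
    by (simp add: sum_product sum_divide_distrib)
  also have "\<dots> = Pc p u a * Pc p (\<lambda>w. (r w, v w)) b / Pc p r a"
    by (simp add: Pc_if[OF fin])
  finally show ?thesis .
qed

lemma ci_Jp:
  fixes f :: "'a \<Rightarrow> 'b" and g :: "'a \<Rightarrow> 'd" and r :: "'a \<Rightarrow> 'c"
  assumes fin: "finite (set_pmf p)" and det: "\<And>w w'. f w = f w' \<Longrightarrow> r w = r w'"
  shows "Hh (Jp p r) (\<lambda>x. (f (fst x), g (snd x), r (fst x))) + Hh (Jp p r) (\<lambda>x. r (fst x))
       = Hh (Jp p r) (\<lambda>x. (f (fst x), r (fst x))) + Hh (Jp p r) (\<lambda>x. (g (snd x), r (fst x)))"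
proof (rule ci_Hh[OF fin_Jp[OF fin]])
  fix x assume x: "x \<in> set_pmf (Jp p r)"
  obtain a b where xab: "x = (a, b)" by (cases x)
  have ab: "(a, b) \<in> set_pmf (Jp p r)" using x xab by simp
  have ab': "a \<in> set_pmf p" "b \<in> set_pmf p" "r b = r a" using set_Jp[OF ab] by auto
  have G: "Pc p r a > 0" using Pc_pos[OF fin ab'(1)] .
  let ?J = "Jp p r"
  have A: "Pc ?J (\<lambda>x. (f (fst x), g (snd x), r (fst x))) (a, b) =
     Pc p (\<lambda>w. (f w, r w)) a * Pc p (\<lambda>w. (r w, g w)) b / Pc p r a"
  proof -
    have "Pc ?J (\<lambda>x. (f (fst x), g (snd x), r (fst x))) (a, b) =
        Pc ?J (\<lambda>x. ((\<lambda>w. (f w, r w)) (fst x), g (snd x))) (a, b)"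
      by (intro Pc_cong) auto
    also have "\<dots> = Pc p (\<lambda>w. (f w, r w)) a * Pc p (\<lambda>w. (r w, g w)) b / Pc p r a"
      by (rule Pc_Jp[OF fin ab]) auto
    finally show ?thesis .
  qed
  have B: "Pc ?J (\<lambda>x. r (fst x)) (a, b) = Pc p r a"
  proof -
    have "Pc ?J (\<lambda>x. r (fst x)) (a, b) = Pc ?J (\<lambda>x. (r (fst x), (\<lambda>_. ()) (snd x))) (a, b)"
      by (intro Pc_cong) auto
    also have "\<dots> = Pc p r a * Pc p (\<lambda>w. (r w, ())) b / Pc p r a"
      by (rule Pc_Jp[OF fin ab]) auto
    also have "Pc p (\<lambda>w. (r w, ())) b = Pc p r a"
    proof -
      have "Pc p (\<lambda>w. (r w, ())) b = Pc p r b" by (intro Pc_cong) auto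
      also have "\<dots> = Pc p r a" using ab'(3) by (rule Pc_eq)
      finally show ?thesis .
    qed
    finally show ?thesis using G by simp
  qed
  have C: "Pc ?J (\<lambda>x. (f (fst x), r (fst x))) (a, b) = Pc p (\<lambda>w. (f w, r w)) a"
  proof -
    have "Pc ?J (\<lambda>x. (f (fst x), r (fst x))) (a, b) = Pc ?J (\<lambda>x. ((\<lambda>w. (f w, r w)) (fst x), (\<lambda>_. ()) (snd x))) (a, b)"
      by (intro Pc_cong) auto
    also have "\<dots> = Pc p (\<lambda>w. (f w, r w)) a * Pc p (\<lambda>w. (r w, ())) b / Pc p r a"
      by (rule Pc_Jp[OF fin ab]) auto
    also have "Pc p (\<lambda>w. (r w, ())) b = Pc p r a"
    proof -
      have "Pc p (\<lambda>w. (r w, ())) b = Pc p r b" by (intro Pc_cong) auto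
      also have "\<dots> = Pc p r a" using ab'(3) by (rule Pc_eq)
      finally show ?thesis .
    qed
    finally show ?thesis using G by simp
  qed
  have D: "Pc ?J (\<lambda>x. (g (snd x), r (fst x))) (a, b) = Pc p (\<lambda>w. (r w, g w)) b"
  proof -
    have "Pc ?J (\<lambda>x. (g (snd x), r (fst x))) (a, b) = Pc ?J (\<lambda>x. (r (fst x), g (snd x))) (a, b)"
      by (intro Pc_cong) auto
    also have "\<dots> = Pc p r a * Pc p (\<lambda>w. (r w, g w)) b / Pc p r a"
      by (rule Pc_Jp[OF fin ab]) auto
    finally show ?thesis using G by simp
  qed
  show "Pc ?J (\<lambda>x. (f (fst x), g (snd x), r (fst x))) x * Pc ?J (\<lambda>x. r (fst x)) x =
        Pc ?J (\<lambda>x. (f (fst x), r (fst x))) x * Pc ?J (\<lambda>x. (g (snd x), r (fst x))) x"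
    unfolding xab A B C D using G by simp
qed




definition mgc :: "((nat \<Rightarrow> 'v) \<times> (nat \<Rightarrow> 'v)) \<Rightarrow> nat \<Rightarrow> 'v" where
  "mgc x = (\<lambda>i. if i = 9 then snd x 0 else if i = 10 then snd x 2 else fst x i)"

definition Zc :: "nat set" where "Zc = {3,4,5,6}"
definition Oc :: "nat set" where "Oc = {0,1,2,3,4,5,6,7,8}"

definition pc :: "(nat \<Rightarrow> 'v) pmf \<Rightarrow> (nat \<Rightarrow> 'v) pmf" where
  "pc p = map_pmf mgc (Jp p (\<lambda>w. restrict w Zc))"

lemma pc_fin: "finite (set_pmf p) \<Longrightarrow> finite (set_pmf (pc p))"
  unfolding pc_def by (simp add: fin_Jp)

lemma ent_pc_J: "finite (set_pmf p) \<Longrightarrow>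
   entropy (pc p) W = Hh (Jp p (\<lambda>w. restrict w Zc)) (\<lambda>x. restrict (mgc x) W)"
  unfolding pc_def entropy_HH HH_map by (simp add: HH_Hh fin_Jp)

lemma J_supp:
  assumes "x \<in> set_pmf (Jp p (\<lambda>w. restrict w Zc))" "i \<in> Zc"
  shows "snd x i = fst x i"
proof -
  have "restrict (snd x) Zc = restrict (fst x) Zc" using set_Jp[OF assms(1)] by simp
  then show ?thesis using assms(2) by (auto simp: restrict_eq_iff)
qed

lemma pc_E1:
  assumes fin: "finite (set_pmf p)" and W: "9 \<notin> W" "10 \<notin> W"
  shows "entropy (pc p) W = entropy p W"
proof -
  have "(\<lambda>x. restrict (mgc x) W) = (\<lambda>x. restrict (fst x) W)"
    using W by (auto simp: restrict_def mgc_def fun_eq_iff)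
  then have "entropy (pc p) W = HH (Jp p (\<lambda>w. restrict w Zc)) (\<lambda>x. restrict (fst x) W)"
    unfolding pc_def entropy_HH HH_map by (rule arg_cong)
  also have "\<dots> = HH (map_pmf fst (Jp p (\<lambda>w. restrict w Zc))) (\<lambda>w. restrict w W)"
    by (simp add: HH_map)
  also have "\<dots> = entropy p W" by (simp add: fst_Jp entropy_HH)
  finally show ?thesis .
qed

lemma pc_E2:
  assumes fin: "finite (set_pmf p)" and W: "W \<subseteq> Zc"
  shows "entropy (pc p) (W \<union> {9,10}) = entropy p (W \<union> {0,2})"
proof -
  let ?J = "Jp p (\<lambda>w. restrict w Zc)"
  have W9: "9 \<notin> W" "10 \<notin> W" using W by (auto simp: Zc_def)
  have "entropy (pc p) (W \<union> {9,10}) = Hh ?J (\<lambda>x. restrict (mgc x) (W \<union> {9,10}))"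
    by (rule ent_pc_J[OF fin])
  also have "\<dots> = Hh ?J (\<lambda>x. restrict (snd x) (W \<union> {0,2}))"
  proof (rule Hh_cong)
    fix x x' assume x: "x \<in> set_pmf ?J" and x': "x' \<in> set_pmf ?J"
    have a: "\<And>i. i \<in> W \<Longrightarrow> mgc x i = snd x i" "\<And>i. i \<in> W \<Longrightarrow> mgc x' i = snd x' i"
      using J_supp[OF x] J_supp[OF x'] W W9 by (auto simp: mgc_def)
    have b: "mgc x 9 = snd x 0" "mgc x 10 = snd x 2" "mgc x' 9 = snd x' 0" "mgc x' 10 = snd x' 2"
      by (auto simp: mgc_def)
    show "(restrict (mgc x') (W \<union> {9, 10}) = restrict (mgc x) (W \<union> {9, 10})) =
          (restrict (snd x') (W \<union> {0, 2}) = restrict (snd x) (W \<union> {0, 2}))"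
      unfolding restrict_eq_iff using a b by auto
  qed
  also have "\<dots> = HH ?J (\<lambda>x. restrict (snd x) (W \<union> {0,2}))"
    by (simp add: HH_Hh fin_Jp fin)
  also have "\<dots> = HH (map_pmf snd ?J) (\<lambda>w. restrict w (W \<union> {0,2}))"
    by (simp add: HH_map)
  also have "\<dots> = entropy p (W \<union> {0,2})" by (simp add: snd_Jp entropy_HH)
  finally show ?thesis .
qed

lemma pc_E3:
  assumes fin: "finite (set_pmf p)"
  shows "entropy (pc p) (Oc \<union> {9,10}) + entropy (pc p) Zc = entropy (pc p) Oc + entropy (pc p) (Zc \<union> {9,10})"
proof -
  let ?r = "\<lambda>w::nat \<Rightarrow> 'a. restrict w Zc"
  let ?J = "Jp p ?r"
  let ?f = "\<lambda>w::nat \<Rightarrow> 'a. restrict w Oc"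
  let ?g = "\<lambda>w::nat \<Rightarrow> 'a. (w 0, w 2)"
  have ZO: "Zc \<subseteq> Oc" by (auto simp: Zc_def Oc_def)
  have O9: "9 \<notin> Oc" "10 \<notin> Oc" "9 \<notin> Zc" "10 \<notin> Zc" by (auto simp: Zc_def Oc_def)
  have mO: "\<And>x i. i \<in> Oc \<Longrightarrow> mgc x i = fst x i" using O9 by (auto simp: mgc_def)
  have mZ: "\<And>x i. i \<in> Zc \<Longrightarrow> mgc x i = fst x i" using O9 by (auto simp: mgc_def)
  have m9: "\<And>x. mgc x 9 = snd x 0" "\<And>x. mgc x 10 = snd x 2" by (auto simp: mgc_def)
  have det: "\<And>w w'. ?f w = ?f w' \<Longrightarrow> ?r w = ?r w'" using ZO by (auto simp: restrict_eq_iff)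
  have 1: "entropy (pc p) (Oc \<union> {9,10}) = Hh ?J (\<lambda>x. (?f (fst x), ?g (snd x), ?r (fst x)))"
    unfolding ent_pc_J[OF fin]
    by (rule Hh_cong) (use set_Jp in \<open>auto simp: restrict_eq_iff mgc_def Oc_def Zc_def\<close>)
  have 2: "entropy (pc p) Zc = Hh ?J (\<lambda>x. ?r (fst x))"
    unfolding ent_pc_J[OF fin]
    by (rule Hh_cong) (use set_Jp in \<open>auto simp: restrict_eq_iff mgc_def Oc_def Zc_def\<close>)
  have 3: "entropy (pc p) Oc = Hh ?J (\<lambda>x. (?f (fst x), ?r (fst x)))"
    unfolding ent_pc_J[OF fin]
    by (rule Hh_cong) (use set_Jp in \<open>auto simp: restrict_eq_iff mgc_def Oc_def Zc_def\<close>)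
  have 4: "entropy (pc p) (Zc \<union> {9,10}) = Hh ?J (\<lambda>x. (?g (snd x), ?r (fst x)))"
    unfolding ent_pc_J[OF fin]
    by (rule Hh_cong) (use set_Jp in \<open>auto simp: restrict_eq_iff mgc_def Oc_def Zc_def\<close>)
  show ?thesis unfolding 1 2 3 4 by (rule ci_Jp[OF fin det])
qed




lemma indep_small:
  assumes "X \<subseteq> vQ" "card X \<le> 3"
  shows "vamos_indep X"
proof -
  have "card (vA \<union> vB) = 4" "card (vA \<union> vC) = 4" "card (vB \<union> vC) = 4" "card (vB \<union> vD) = 4" "card (vC \<union> vD) = 4"
    by (simp_all add: vA_def vB_def vC_def vD_def)
  then show ?thesis using assms unfolding vamos_indep_def by auto
qed

lemma circ5:
  assumes "C \<subseteq> vQ" "card C = 5"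
    "\<not> vA \<union> vB \<subseteq> C" "\<not> vA \<union> vC \<subseteq> C" "\<not> vB \<union> vC \<subseteq> C" "\<not> vB \<union> vD \<subseteq> C" "\<not> vC \<union> vD \<subseteq> C"
  shows "vamos_circuit C"
  unfolding vamos_circuit_def
proof (intro conjI allI impI)
  show "C \<subseteq> vQ" by fact
  show "\<not> vamos_indep C" using assms(2) by (simp add: vamos_indep_def)
  fix Y assume Y: "Y \<subset> C"
  have "finite C" using assms(2) card.infinite by fastforce
  then have "card Y < card C" using Y by (rule psubset_card_mono)
  then show "vamos_indep Y" using Y assms unfolding vamos_indep_def by auto
qed

lemma circ4:
  assumes "C \<subseteq> vQ" "card C = 4" "\<not> vamos_indep C"
  shows "vamos_circuit C"
  unfolding vamos_circuit_def
proof (intro conjI allI impI)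
  show "C \<subseteq> vQ" by fact
  show "\<not> vamos_indep C" by fact
  fix Y assume Y: "Y \<subset> C"
  have "finite C" using assms(2) card.infinite by fastforce
  then have "card Y < card C" using Y by (rule psubset_card_mono)
  have "Y \<subseteq> vQ" using Y assms(1) by auto
  moreover have "card Y \<le> 3" using \<open>card Y < card C\<close> assms(2) by simp
  ultimately show "vamos_indep Y" by (rule indep_small)
qed

lemma V1I:
  assumes "X \<subseteq> vQ" "Y \<subseteq> X" "1 \<notin> Y" "vamos_circuit (Y \<union> {1})"
  shows "X \<in> V1"
proof -
  have "Y \<subseteq> vQ - {1}" using assms(1,2,3) by auto
  then show ?thesis unfolding V1_def vdealer_def mem_Collect_eq using assms(1,2,4) by blast
qed

lemma notV1:
  assumes X: "X \<subseteq> vQ" "1 \<notin> X" "card X \<le> 4" "\<not> {2,3,4} \<subseteq> X" "\<not> {2,5,6} \<subseteq> X"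
    and dep: "card X = 4 \<Longrightarrow> \<not> vamos_indep X"
  shows "X \<notin> V1"
proof
  assume "X \<in> V1"
  then obtain Y where Y: "Y \<subseteq> vQ - {1}" "Y \<subseteq> X" "vamos_circuit (Y \<union> {1})"
    using X(2) unfolding V1_def vdealer_def by auto
  have finX: "finite X" using X(1) finite_subset by (auto simp: vQ_def)
  show False
  proof (cases "Y = X \<and> card X = 4")
    case True
    have "X \<subset> Y \<union> {1}" using True X(2) by auto
    then have "vamos_indep X" using Y(3) unfolding vamos_circuit_def by blast
    then show False using dep True by simp
  next
    case False
    have "card Y \<le> 3"
    proof (cases "Y = X")
      case True then show ?thesis using False X(3) by auto
    next
      case False
      then have "Y \<subset> X" using Y(2) by auto
      then have "card Y < card X" using finX by (metis psubset_card_mono)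
      then show ?thesis using X(3) by simp
    qed
    moreover have "finite Y" using finX Y(2) finite_subset by auto
    ultimately have c: "card (Y \<union> {1}) \<le> 4" by (simp add: card_insert_if)
    have "Y \<union> {1} \<subseteq> vQ" using Y(1) by (auto simp: vQ_def)
    moreover have "Y \<union> {1} \<noteq> vA \<union> vB"
    proof
      assume e: "Y \<union> {1} = vA \<union> vB"
      have "{2,3,4::nat} \<subseteq> Y"
      proof
        fix x assume "x \<in> {2,3,4::nat}"
        then have "x \<in> Y \<union> {1}" "x \<noteq> 1" unfolding e by (auto simp: vA_def vB_def)
        then show "x \<in> Y" by simp
      qed
      then show False using X(4) Y(2) by blast
    qed
    moreover have "Y \<union> {1} \<noteq> vA \<union> vC"
    proof
      assume e: "Y \<union> {1} = vA \<union> vC"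
      have "{2,5,6::nat} \<subseteq> Y"
      proof
        fix x assume "x \<in> {2,5,6::nat}"
        then have "x \<in> Y \<union> {1}" "x \<noteq> 1" unfolding e by (auto simp: vA_def vC_def)
        then show "x \<in> Y" by simp
      qed
      then show False using X(5) Y(2) by blast
    qed
    moreover have "1 \<notin> vB \<union> vC" "1 \<notin> vB \<union> vD" "1 \<notin> vC \<union> vD"
      by (auto simp: vB_def vC_def vD_def)
    then have "Y \<union> {1} \<noteq> vB \<union> vC" "Y \<union> {1} \<noteq> vB \<union> vD" "Y \<union> {1} \<noteq> vC \<union> vD"
      by blast+
    ultimately have "vamos_indep (Y \<union> {1})" using c unfolding vamos_indep_def by auto
    then show False using Y(3) unfolding vamos_circuit_def by blast
  qed
qed

lemma "{2,3,6,8} \<in> V1"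
  by (rule V1I[of _ "{2,3,6,8}"], auto simp: vQ_def, rule circ5, auto simp: vQ_def vA_def vB_def vC_def vD_def)

lemma "{2,3,4} \<in> V1"
  by (rule V1I[of _ "{2,3,4}"], auto simp: vQ_def, rule circ4, auto simp: vQ_def vamos_indep_def vA_def vB_def)

lemma "{3,4,5,6} \<notin> V1"
  by (rule notV1) (auto simp: vQ_def vamos_indep_def vB_def vC_def)

lemma "{2,3,7} \<notin> V1"
  by (rule notV1) (auto simp: vQ_def vamos_indep_def vB_def vC_def)




lemma nV0: "{2,3} \<notin> V1"
  by (rule notV1) (auto simp: vQ_def vamos_indep_def vA_def vB_def vC_def vD_def)

lemma nV1: "{2,4} \<notin> V1"
  by (rule notV1) (auto simp: vQ_def vamos_indep_def vA_def vB_def vC_def vD_def)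

lemma nV2: "{2,3,6} \<notin> V1"
  by (rule notV1) (auto simp: vQ_def vamos_indep_def vA_def vB_def vC_def vD_def)

lemma nV3: "{2,3,7} \<notin> V1"
  by (rule notV1) (auto simp: vQ_def vamos_indep_def vA_def vB_def vC_def vD_def)

lemma nV4: "{2,7,8} \<notin> V1"
  by (rule notV1) (auto simp: vQ_def vamos_indep_def vA_def vB_def vC_def vD_def)

lemma nV5: "{3,4,5} \<notin> V1"
  by (rule notV1) (auto simp: vQ_def vamos_indep_def vA_def vB_def vC_def vD_def)

lemma nV6: "{3,6,8} \<notin> V1"
  by (rule notV1) (auto simp: vQ_def vamos_indep_def vA_def vB_def vC_def vD_def)

lemma nV7: "{3,4,5,6} \<notin> V1"
  by (rule notV1) (auto simp: vQ_def vamos_indep_def vA_def vB_def vC_def vD_def)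

lemma nV8: "{3,4,7,8} \<notin> V1"
  by (rule notV1) (auto simp: vQ_def vamos_indep_def vA_def vB_def vC_def vD_def)

lemma nV9: "{5,6,7,8} \<notin> V1"
  by (rule notV1) (auto simp: vQ_def vamos_indep_def vA_def vB_def vC_def vD_def)

lemma yV0: "{2,3,4} \<in> V1"
  by (rule V1I[of _ "{2,3,4}"], auto simp: vQ_def, rule circ4, auto simp: vQ_def vamos_indep_def vA_def vB_def vC_def vD_def)

lemma yV1: "{2,5,6} \<in> V1"
  by (rule V1I[of _ "{2,5,6}"], auto simp: vQ_def, rule circ4, auto simp: vQ_def vamos_indep_def vA_def vB_def vC_def vD_def)

lemma yV2: "{2,3,6,8} \<in> V1"
  by (rule V1I[of _ "{2,3,6,8}"], auto simp: vQ_def, rule circ5, auto simp: vQ_def vA_def vB_def vC_def vD_def)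

lemma yV3: "{2,3,7,8} \<in> V1"
  by (rule V1I[of _ "{2,3,7,8}"], auto simp: vQ_def, rule circ5, auto simp: vQ_def vA_def vB_def vC_def vD_def)

lemma yV4: "{3,4,5,7} \<in> V1"
  by (rule V1I[of _ "{3,4,5,7}"], auto simp: vQ_def, rule circ5, auto simp: vQ_def vA_def vB_def vC_def vD_def)

lemma yV5: "{3,4,5,8} \<in> V1"
  by (rule V1I[of _ "{3,4,5,8}"], auto simp: vQ_def, rule circ5, auto simp: vQ_def vA_def vB_def vC_def vD_def)

lemma yV6: "{3,6,7,8} \<in> V1"
  by (rule V1I[of _ "{3,6,7,8}"], auto simp: vQ_def, rule circ5, auto simp: vQ_def vA_def vB_def vC_def vD_def)

lemmas nV = nV0 nV1 nV2 nV3 nV4 nV5 nV6 nV7 nV8 nV9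

lemmas yV = yV0 yV1 yV2 yV3 yV4 yV5 yV6


lemma sm:
  assumes "finite (set_pmf p)" "X \<union> Y = U" "X \<inter> Y = I"
  shows "0 \<le> entropy p X + entropy p Y - entropy p U - entropy p I"
  using ent_submod[OF assms(1), of X Y] assms(2,3) by simp

lemma sm0:
  assumes "finite (set_pmf p)" "X \<union> Y = U" "X \<inter> Y = {}"
  shows "0 \<le> entropy p X + entropy p Y - entropy p U"
  using ent_submod[OF assms(1), of X Y] assms(2,3) ent_empty[OF assms(1)] by simp

lemma mono_lit:
  assumes "finite (set_pmf p)" "Y \<subseteq> X"
  shows "0 \<le> entropy p X - entropy p Y"
  using ent_mono[OF assms] by simp

lemma main_bound:
  fixes p :: "(nat \<Rightarrow> 'v) pmf"
  assumes ss: "ss_scheme p 0 vQ V1"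
  shows "9 * entropy p {0} \<le> 4 * entropy p {2} + entropy p {3} + entropy p {4} + entropy p {5} + entropy p {6}"
proof -
  have fin: "finite (set_pmf p)" using ss by (simp add: ss_scheme_def)
  define q where "q = pc p"
  have finq: "finite (set_pmf q)" unfolding q_def by (rule pc_fin[OF fin])
  have E1: "\<And>W. 9 \<notin> W \<Longrightarrow> 10 \<notin> W \<Longrightarrow> entropy q W = entropy p W"
    unfolding q_def by (rule pc_E1[OF fin])
  have vQ9: "\<And>X. X \<subseteq> vQ \<Longrightarrow> 9 \<notin> X \<and> 10 \<notin> X \<and> 9 \<notin> {0} \<union> X \<and> 10 \<notin> {0} \<union> X"
    by (auto simp: vQ_def)
  have unq1: "\<And>X X0. X \<subseteq> vQ \<Longrightarrow> X \<noteq> {} \<Longrightarrow> X \<notin> V1 \<Longrightarrow> X0 = {0} \<union> X \<Longrightarrow>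
      0 \<le> entropy q X0 - entropy q X - entropy q {0}"
  proof -
    fix X X0 assume a: "X \<subseteq> vQ" "X \<noteq> {}" "X \<notin> V1" "X0 = {0} \<union> X"
    have "cond_entropy p {0} X = entropy p {0}" using ss a(1-3) by (simp add: ss_scheme_def)
    then have "entropy p X0 = entropy p X + entropy p {0}" using a(4) by (simp add: cond_entropy_def)
    moreover have "entropy q X0 = entropy p X0" "entropy q X = entropy p X" "entropy q {0} = entropy p {0}"
      using vQ9[OF a(1)] a(4) by (auto intro!: E1)
    ultimately show "0 \<le> entropy q X0 - entropy q X - entropy q {0}" by simp
  qed
  have qu1: "\<And>X X0. X \<in> V1 \<Longrightarrow> X0 = {0} \<union> X \<Longrightarrow> 0 \<le> entropy q X - entropy q X0"
  proof -
    fix X X0 assume a: "X \<in> V1" "X0 = {0} \<union> X"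
    have XQ: "X \<subseteq> vQ" using a(1) by (simp add: V1_def)
    have "cond_entropy p {0} X = 0" using ss a(1) by (simp add: ss_scheme_def)
    then have "entropy p X0 = entropy p X" using a(2) by (simp add: cond_entropy_def)
    moreover have "entropy q X0 = entropy p X0" "entropy q X = entropy p X"
      using vQ9[OF XQ] a(2) by (auto intro!: E1)
    ultimately show "0 \<le> entropy q X - entropy q X0" by simp
  qed
  have cp: "\<And>W A B. W \<subseteq> Zc \<Longrightarrow> A = W \<union> {9,10} \<Longrightarrow> B = W \<union> {0,2} \<Longrightarrow> entropy q A = entropy q B"
  proof -
    fix W A B assume a: "W \<subseteq> Zc" "A = W \<union> {9,10}" "B = W \<union> {0,2}"
    have "entropy q A = entropy p B" unfolding q_def a(2,3) by (rule pc_E2[OF fin a(1)])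
    moreover have "entropy q B = entropy p B" using a(1,3) by (intro E1) (auto simp: Zc_def)
    ultimately show "entropy q A = entropy q B" by simp
  qed
  have cp1: "\<And>W A B. W \<subseteq> Zc \<Longrightarrow> A = W \<union> {9,10} \<Longrightarrow> B = W \<union> {0,2} \<Longrightarrow> 0 \<le> entropy q A - entropy q B"
    using cp by fastforce
  have cp2: "\<And>W A B. W \<subseteq> Zc \<Longrightarrow> A = W \<union> {9,10} \<Longrightarrow> B = W \<union> {0,2} \<Longrightarrow> 0 \<le> entropy q B - entropy q A"
    using cp by fastforce
  have ci: "entropy q {0,1,2,3,4,5,6,7,8,9,10} + entropy q {3,4,5,6} = entropy q {0,1,2,3,4,5,6,7,8} + entropy q {3,4,5,6,9,10}"
  proof -
    have e1: "Oc \<union> {9,10} = {0,1,2,3,4,5,6,7,8,9,10}" by (auto simp: Oc_def)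
    have e2: "Zc \<union> {9,10} = {3,4,5,6,9,10}" by (auto simp: Zc_def)
    show ?thesis using pc_E3[OF fin] unfolding q_def e1 e2 by (simp add: Oc_def Zc_def)
  qed

  have F1: "0 \<le> entropy q {0,1,2,3,4,5,6,7,8,9,10} - entropy q {0,1,3,4,5,6,7,8,9,10}" by (rule mono_lit[OF finq]) auto
  have F2: "0 \<le> entropy q {0,1,2,3,4,5,6,7,8,9,10} - entropy q {0,1,2,4,5,6,7,8,9,10}" by (rule mono_lit[OF finq]) auto
  have F3: "0 \<le> entropy q {0,1,2,3,4,5,6,7,8,9,10} - entropy q {0,1,2,3,5,6,7,8,9,10}" by (rule mono_lit[OF finq]) auto
  have F4: "0 \<le> entropy q {0,1,2,3,4,5,6,7,8,9,10} - entropy q {0,1,2,3,4,6,7,8,9,10}" by (rule mono_lit[OF finq]) auto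
  have F5: "0 \<le> entropy q {0,1,2,3,4,5,6,7,8,9,10} - entropy q {0,1,2,3,4,5,7,8,9,10}" by (rule mono_lit[OF finq]) auto
  have F6: "0 \<le> entropy q {0,3,6,7,8,9,10} + entropy q {3,4,6,7,8,9,10} - entropy q {0,3,4,6,7,8,9,10} - entropy q {3,6,7,8,9,10}" by (rule sm[OF finq]) auto
  have F7: "0 \<le> entropy q {0,3,6,7,8} + entropy q {3,5,6,7,8} - entropy q {0,3,5,6,7,8} - entropy q {3,6,7,8}" by (rule sm[OF finq]) auto
  have F8: "0 \<le> entropy q {0,2,3,4,5,7,8,9,10} + entropy q {2,3,4,5,6,7,8,9,10} - entropy q {0,2,3,4,5,6,7,8,9,10} - entropy q {2,3,4,5,7,8,9,10}" by (rule sm[OF finq]) auto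
  have F9: "0 \<le> entropy q {0,3,4,5,8} + entropy q {3,4,5,7,8} - entropy q {0,3,4,5,7,8} - entropy q {3,4,5,8}" by (rule sm[OF finq]) auto
  have F10: "0 \<le> entropy q {0,2,8,9,10} + entropy q {2,7,8,9,10} - entropy q {0,2,7,8,9,10} - entropy q {2,8,9,10}" by (rule sm[OF finq]) auto
  have F11: "0 \<le> entropy q {0,2,9,10} + entropy q {2,8,9,10} - entropy q {0,2,8,9,10} - entropy q {2,9,10}" by (rule sm[OF finq]) auto
  have F12: "0 \<le> entropy q {0,2,3,4} + entropy q {2,3,4,9,10} - entropy q {0,2,3,4,9,10} - entropy q {2,3,4}" by (rule sm[OF finq]) auto
  have F13: "0 \<le> entropy q {0,2,5,6} + entropy q {2,5,6,9,10} - entropy q {0,2,5,6,9,10} - entropy q {2,5,6}" by (rule sm[OF finq]) auto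
  have F14: "0 \<le> entropy q {0,3,4,5,7,8} + entropy q {3,4,5,7,8,9,10} - entropy q {0,3,4,5,7,8,9,10} - entropy q {3,4,5,7,8}" by (rule sm[OF finq]) auto
  have F15: "0 \<le> entropy q {0,3,5,6,7,8} + entropy q {3,5,6,7,8,9,10} - entropy q {0,3,5,6,7,8,9,10} - entropy q {3,5,6,7,8}" by (rule sm[OF finq]) auto
  have F16: "0 \<le> entropy q {0,1,5,6,7,8} + entropy q {0,2,5,6,7,8} - entropy q {0,1,2,5,6,7,8} - entropy q {0,5,6,7,8}" by (rule sm[OF finq]) auto
  have F17: "0 \<le> entropy q {0,1,3,4,5,6,7,8} + entropy q {0,2,3,4,5,6,7,8} - entropy q {0,1,2,3,4,5,6,7,8} - entropy q {0,3,4,5,6,7,8}" by (rule sm[OF finq]) auto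
  have F18: "0 \<le> entropy q {0,1,3,4,7,8,9,10} + entropy q {0,2,3,4,7,8,9,10} - entropy q {0,1,2,3,4,7,8,9,10} - entropy q {0,3,4,7,8,9,10}" by (rule sm[OF finq]) auto
  have F19: "0 \<le> entropy q {0,1,5,6,7,8} + entropy q {0,3,5,6,7,8} - entropy q {0,1,3,5,6,7,8} - entropy q {0,5,6,7,8}" by (rule sm[OF finq]) auto
  have F20: "0 \<le> entropy q {0,1,2,4,5,6,7,8,9,10} + entropy q {0,2,3,4,5,6,7,8,9,10} - entropy q {0,1,2,3,4,5,6,7,8,9,10} - entropy q {0,2,4,5,6,7,8,9,10}" by (rule sm[OF finq]) auto
  have F21: "0 \<le> entropy q {0,1,3,5,6,7,8,9,10} + entropy q {0,3,4,5,6,7,8,9,10} - entropy q {0,1,3,4,5,6,7,8,9,10} - entropy q {0,3,5,6,7,8,9,10}" by (rule sm[OF finq]) auto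
  have F22: "0 \<le> entropy q {0,1,2,3,5,6,7,8,9,10} + entropy q {0,2,3,4,5,6,7,8,9,10} - entropy q {0,1,2,3,4,5,6,7,8,9,10} - entropy q {0,2,3,5,6,7,8,9,10}" by (rule sm[OF finq]) auto
  have F23: "0 \<le> entropy q {0,1,2,3,4,6,7,9,10} + entropy q {0,2,3,4,5,6,7,9,10} - entropy q {0,1,2,3,4,5,6,7,9,10} - entropy q {0,2,3,4,6,7,9,10}" by (rule sm[OF finq]) auto
  have F24: "0 \<le> entropy q {0,1,2,3,4,6,8,9,10} + entropy q {0,2,3,4,5,6,8,9,10} - entropy q {0,1,2,3,4,5,6,8,9,10} - entropy q {0,2,3,4,6,8,9,10}" by (rule sm[OF finq]) auto
  have F25: "0 \<le> entropy q {0,1,2,3,4,7} + entropy q {0,2,3,4,6,7} - entropy q {0,1,2,3,4,6,7} - entropy q {0,2,3,4,7}" by (rule sm[OF finq]) auto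
  have F26: "0 \<le> entropy q {0,1,2,3,4,5,7,8,9,10} + entropy q {0,2,3,4,5,6,7,8,9,10} - entropy q {0,1,2,3,4,5,6,7,8,9,10} - entropy q {0,2,3,4,5,7,8,9,10}" by (rule sm[OF finq]) auto
  have F27: "0 \<le> entropy q {0,1,2,3,4,6,7} + entropy q {0,2,3,4,6,7,9,10} - entropy q {0,1,2,3,4,6,7,9,10} - entropy q {0,2,3,4,6,7}" by (rule sm[OF finq]) auto
  have F28: "0 \<le> entropy q {0,1,3,4,7,8} + entropy q {0,3,4,7,8,9,10} - entropy q {0,1,3,4,7,8,9,10} - entropy q {0,3,4,7,8}" by (rule sm[OF finq]) auto
  have F29: "0 \<le> entropy q {0,1,2,5,6,7,8} + entropy q {0,2,5,6,7,8,9,10} - entropy q {0,1,2,5,6,7,8,9,10} - entropy q {0,2,5,6,7,8}" by (rule sm[OF finq]) auto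
  have F30: "0 \<le> entropy q {0,1,3,5,6,7,8} + entropy q {0,3,5,6,7,8,9,10} - entropy q {0,1,3,5,6,7,8,9,10} - entropy q {0,3,5,6,7,8}" by (rule sm[OF finq]) auto
  have F31: "0 \<le> entropy q {2,4} + entropy q {3,4} - entropy q {2,3,4} - entropy q {4}" by (rule sm[OF finq]) auto
  have F32: "0 \<le> entropy q {0,1,2,5,6,7,8} + entropy q {0,1,3,5,6,7,8} - entropy q {0,1,2,3,5,6,7,8} - entropy q {0,1,5,6,7,8}" by (rule sm[OF finq]) auto
  have F33: "0 \<le> entropy q {2,9,10} + entropy q {3,9,10} - entropy q {2,3,9,10} - entropy q {9,10}" by (rule sm[OF finq]) auto
  have F34: "0 \<le> entropy q {2} + entropy q {4} - entropy q {2,4}" by (rule sm0[OF finq]) auto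
  have F35: "0 \<le> entropy q {2,3,9,10} + entropy q {3,4,9,10} - entropy q {2,3,4,9,10} - entropy q {3,9,10}" by (rule sm[OF finq]) auto
  have F36: "0 \<le> entropy q {0,1,2,3,5,6,7,8,9,10} + entropy q {0,1,3,4,5,6,7,8,9,10} - entropy q {0,1,2,3,4,5,6,7,8,9,10} - entropy q {0,1,3,5,6,7,8,9,10}" by (rule sm[OF finq]) auto
  have F37: "0 \<le> entropy q {2,6} + entropy q {5,6} - entropy q {2,5,6} - entropy q {6}" by (rule sm[OF finq]) auto
  have F38: "0 \<le> entropy q {2,6,9,10} + entropy q {5,6,9,10} - entropy q {2,5,6,9,10} - entropy q {6,9,10}" by (rule sm[OF finq]) auto
  have F39: "0 \<le> entropy q {0,2,3,4,6,8,9,10} + entropy q {0,3,4,5,6,8,9,10} - entropy q {0,2,3,4,5,6,8,9,10} - entropy q {0,3,4,6,8,9,10}" by (rule sm[OF finq]) auto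
  have F40: "0 \<le> entropy q {0,1,2,3,4,6,7,8,9,10} + entropy q {0,1,3,4,5,6,7,8,9,10} - entropy q {0,1,2,3,4,5,6,7,8,9,10} - entropy q {0,1,3,4,6,7,8,9,10}" by (rule sm[OF finq]) auto
  have F41: "0 \<le> entropy q {2} + entropy q {6} - entropy q {2,6}" by (rule sm0[OF finq]) auto
  have F42: "0 \<le> entropy q {0,1,2,3,4,7,8} + entropy q {0,1,3,4,6,7,8} - entropy q {0,1,2,3,4,6,7,8} - entropy q {0,1,3,4,7,8}" by (rule sm[OF finq]) auto
  have F43: "0 \<le> entropy q {2,3,5,7,8,9,10} + entropy q {3,5,6,7,8,9,10} - entropy q {2,3,5,6,7,8,9,10} - entropy q {3,5,7,8,9,10}" by (rule sm[OF finq]) auto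
  have F44: "0 \<le> entropy q {0,2,3,4,5,6,8} + entropy q {0,3,4,5,6,7,8} - entropy q {0,2,3,4,5,6,7,8} - entropy q {0,3,4,5,6,8}" by (rule sm[OF finq]) auto
  have F45: "0 \<le> entropy q {0,2,3,4,5,9,10} + entropy q {0,3,4,5,7,9,10} - entropy q {0,2,3,4,5,7,9,10} - entropy q {0,3,4,5,9,10}" by (rule sm[OF finq]) auto
  have F46: "0 \<le> entropy q {0,2,3,5,6,8,9,10} + entropy q {0,3,5,6,7,8,9,10} - entropy q {0,2,3,5,6,7,8,9,10} - entropy q {0,3,5,6,8,9,10}" by (rule sm[OF finq]) auto
  have F47: "0 \<le> entropy q {2,3} + entropy q {3,8} - entropy q {2,3,8} - entropy q {3}" by (rule sm[OF finq]) auto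
  have F48: "0 \<le> entropy q {0,2,3,4,5,6} + entropy q {0,3,4,5,6,8} - entropy q {0,2,3,4,5,6,8} - entropy q {0,3,4,5,6}" by (rule sm[OF finq]) auto
  have F49: "0 \<le> entropy q {2,7,9,10} + entropy q {7,8,9,10} - entropy q {2,7,8,9,10} - entropy q {7,9,10}" by (rule sm[OF finq]) auto
  have F50: "0 \<le> entropy q {2,3} + entropy q {3,9,10} - entropy q {2,3,9,10} - entropy q {3}" by (rule sm[OF finq]) auto
  have F51: "0 \<le> entropy q {2,6} + entropy q {6,9,10} - entropy q {2,6,9,10} - entropy q {6}" by (rule sm[OF finq]) auto
  have F52: "0 \<le> entropy q {2,7,8} + entropy q {7,8,9,10} - entropy q {2,7,8,9,10} - entropy q {7,8}" by (rule sm[OF finq]) auto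
  have F53: "0 \<le> entropy q {0,2,3,4,7,8} + entropy q {0,3,4,7,8,9,10} - entropy q {0,2,3,4,7,8,9,10} - entropy q {0,3,4,7,8}" by (rule sm[OF finq]) auto
  have F54: "0 \<le> entropy q {0,1,2,3,5,6,7,8} + entropy q {0,1,3,5,6,7,8,9,10} - entropy q {0,1,2,3,5,6,7,8,9,10} - entropy q {0,1,3,5,6,7,8}" by (rule sm[OF finq]) auto
  have F55: "0 \<le> entropy q {0,1,2,3,4,5,6,7,8} + entropy q {0,1,3,4,5,6,7,8,9,10} - entropy q {0,1,2,3,4,5,6,7,8,9,10} - entropy q {0,1,3,4,5,6,7,8}" by (rule sm[OF finq]) auto
  have F56: "0 \<le> entropy q {3} + entropy q {4} - entropy q {3,4}" by (rule sm0[OF finq]) auto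
  have F57: "0 \<le> entropy q {0,2,3,5,6,7,8,9,10} + entropy q {0,2,4,5,6,7,8,9,10} - entropy q {0,2,3,4,5,6,7,8,9,10} - entropy q {0,2,5,6,7,8,9,10}" by (rule sm[OF finq]) auto
  have F58: "0 \<le> entropy q {0,1,2,3,5,6,7,8,9,10} + entropy q {0,1,2,4,5,6,7,8,9,10} - entropy q {0,1,2,3,4,5,6,7,8,9,10} - entropy q {0,1,2,5,6,7,8,9,10}" by (rule sm[OF finq]) auto
  have F59: "0 \<le> entropy q {0,2,3,9,10} + entropy q {0,2,5,9,10} - entropy q {0,2,3,5,9,10} - entropy q {0,2,9,10}" by (rule sm[OF finq]) auto
  have F60: "0 \<le> entropy q {3,6,7,8,9,10} + entropy q {5,6,7,8,9,10} - entropy q {3,5,6,7,8,9,10} - entropy q {6,7,8,9,10}" by (rule sm[OF finq]) auto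
  have F61: "0 \<le> entropy q {0,2,3,5,9,10} + entropy q {0,2,5,6,9,10} - entropy q {0,2,3,5,6,9,10} - entropy q {0,2,5,9,10}" by (rule sm[OF finq]) auto
  have F62: "0 \<le> entropy q {0,2,3,4,5,7,9,10} + entropy q {0,2,4,5,6,7,9,10} - entropy q {0,2,3,4,5,6,7,9,10} - entropy q {0,2,4,5,7,9,10}" by (rule sm[OF finq]) auto
  have F63: "0 \<le> entropy q {3,7,8,9,10} + entropy q {6,7,8,9,10} - entropy q {3,6,7,8,9,10} - entropy q {7,8,9,10}" by (rule sm[OF finq]) auto
  have F64: "0 \<le> entropy q {3,4,7,8,9,10} + entropy q {4,6,7,8,9,10} - entropy q {3,4,6,7,8,9,10} - entropy q {4,7,8,9,10}" by (rule sm[OF finq]) auto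
  have F65: "0 \<le> entropy q {3,6,8} + entropy q {6,7,8} - entropy q {3,6,7,8} - entropy q {6,8}" by (rule sm[OF finq]) auto
  have F66: "0 \<le> entropy q {3,4,9,10} + entropy q {4,7,9,10} - entropy q {3,4,7,9,10} - entropy q {4,9,10}" by (rule sm[OF finq]) auto
  have F67: "0 \<le> entropy q {3} + entropy q {8} - entropy q {3,8}" by (rule sm0[OF finq]) auto
  have F68: "0 \<le> entropy q {2,3,7} + entropy q {2,7,8} - entropy q {2,3,7,8} - entropy q {2,7}" by (rule sm[OF finq]) auto
  have F69: "0 \<le> entropy q {3} + entropy q {9,10} - entropy q {3,9,10}" by (rule sm0[OF finq]) auto
  have F70: "0 \<le> entropy q {0,1,2,3,5,6,7,8} + entropy q {0,1,2,5,6,7,8,9,10} - entropy q {0,1,2,3,5,6,7,8,9,10} - entropy q {0,1,2,5,6,7,8}" by (rule sm[OF finq]) auto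
  have F71: "0 \<le> entropy q {0,2,3,4,9,10} + entropy q {0,2,3,5,9,10} - entropy q {0,2,3,4,5,9,10} - entropy q {0,2,3,9,10}" by (rule sm[OF finq]) auto
  have F72: "0 \<le> entropy q {0,3,4,6,8,9,10} + entropy q {0,3,5,6,8,9,10} - entropy q {0,3,4,5,6,8,9,10} - entropy q {0,3,6,8,9,10}" by (rule sm[OF finq]) auto
  have F73: "0 \<le> entropy q {0,2,3,4,6,8,9,10} + entropy q {0,2,3,5,6,8,9,10} - entropy q {0,2,3,4,5,6,8,9,10} - entropy q {0,2,3,6,8,9,10}" by (rule sm[OF finq]) auto
  have F74: "0 \<le> entropy q {3,4,7,8,9,10} + entropy q {3,5,7,8,9,10} - entropy q {3,4,5,7,8,9,10} - entropy q {3,7,8,9,10}" by (rule sm[OF finq]) auto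
  have F75: "0 \<le> entropy q {0,2,4,5,9,10} + entropy q {0,2,5,6,9,10} - entropy q {0,2,4,5,6,9,10} - entropy q {0,2,5,9,10}" by (rule sm[OF finq]) auto
  have F76: "0 \<le> entropy q {0,2,3,4,8,9,10} + entropy q {0,2,3,6,8,9,10} - entropy q {0,2,3,4,6,8,9,10} - entropy q {0,2,3,8,9,10}" by (rule sm[OF finq]) auto
  have F77: "0 \<le> entropy q {4,7,8,9,10} + entropy q {6,7,8,9,10} - entropy q {4,6,7,8,9,10} - entropy q {7,8,9,10}" by (rule sm[OF finq]) auto
  have F78: "0 \<le> entropy q {2,3,4,5,7,8,9,10} + entropy q {2,3,5,6,7,8,9,10} - entropy q {2,3,4,5,6,7,8,9,10} - entropy q {2,3,5,7,8,9,10}" by (rule sm[OF finq]) auto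
  have F79: "0 \<le> entropy q {4} + entropy q {7} - entropy q {4,7}" by (rule sm0[OF finq]) auto
  have F80: "0 \<le> entropy q {0,2,3,4,5,6,8,9,10} + entropy q {0,2,3,5,6,7,8,9,10} - entropy q {0,2,3,4,5,6,7,8,9,10} - entropy q {0,2,3,5,6,8,9,10}" by (rule sm[OF finq]) auto
  have F81: "0 \<le> entropy q {0,2,3,4,7} + entropy q {0,2,3,7,8} - entropy q {0,2,3,4,7,8} - entropy q {0,2,3,7}" by (rule sm[OF finq]) auto
  have F82: "0 \<le> entropy q {0,2,3,4,9,10} + entropy q {0,2,3,8,9,10} - entropy q {0,2,3,4,8,9,10} - entropy q {0,2,3,9,10}" by (rule sm[OF finq]) auto
  have F83: "0 \<le> entropy q {4,7} + entropy q {7,9,10} - entropy q {4,7,9,10} - entropy q {7}" by (rule sm[OF finq]) auto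
  have F84: "0 \<le> entropy q {0,1,2,3,4,5,6,7,8} + entropy q {0,1,2,3,5,6,7,8,9,10} - entropy q {0,1,2,3,4,5,6,7,8,9,10} - entropy q {0,1,2,3,5,6,7,8}" by (rule sm[OF finq]) auto
  have F85: "0 \<le> entropy q {5} + entropy q {6} - entropy q {5,6}" by (rule sm0[OF finq]) auto
  have F86: "0 \<le> entropy q {0,3,4,5,7,8,9,10} + entropy q {0,3,4,6,7,8,9,10} - entropy q {0,3,4,5,6,7,8,9,10} - entropy q {0,3,4,7,8,9,10}" by (rule sm[OF finq]) auto
  have F87: "0 \<le> entropy q {0,1,2,3,4,5,7,8,9,10} + entropy q {0,1,2,3,4,6,7,8,9,10} - entropy q {0,1,2,3,4,5,6,7,8,9,10} - entropy q {0,1,2,3,4,7,8,9,10}" by (rule sm[OF finq]) auto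
  have F88: "0 \<le> entropy q {3,4,5} + entropy q {3,4,7} - entropy q {3,4,5,7} - entropy q {3,4}" by (rule sm[OF finq]) auto
  have F89: "0 \<le> entropy q {0,1,2,3,4,5,6,8,9,10} + entropy q {0,1,2,3,4,6,7,8,9,10} - entropy q {0,1,2,3,4,5,6,7,8,9,10} - entropy q {0,1,2,3,4,6,8,9,10}" by (rule sm[OF finq]) auto
  have F90: "0 \<le> entropy q {0,2,3,5,6} + entropy q {0,2,3,6,8} - entropy q {0,2,3,5,6,8} - entropy q {0,2,3,6}" by (rule sm[OF finq]) auto
  have F91: "0 \<le> entropy q {0,1,2,3,4,5,7,9,10} + entropy q {0,1,2,3,4,7,8,9,10} - entropy q {0,1,2,3,4,5,7,8,9,10} - entropy q {0,1,2,3,4,7,9,10}" by (rule sm[OF finq]) auto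
  have F92: "0 \<le> entropy q {0,2,5,7,8} + entropy q {0,2,7,8,9,10} - entropy q {0,2,5,7,8,9,10} - entropy q {0,2,7,8}" by (rule sm[OF finq]) auto
  have F93: "0 \<le> entropy q {0,1,2,3,4,5,7,8} + entropy q {0,1,2,3,4,7,8,9,10} - entropy q {0,1,2,3,4,5,7,8,9,10} - entropy q {0,1,2,3,4,7,8}" by (rule sm[OF finq]) auto
  have F94: "0 \<le> entropy q {0,1,3,4,5,6,7,8} + entropy q {0,1,3,4,6,7,8,9,10} - entropy q {0,1,3,4,5,6,7,8,9,10} - entropy q {0,1,3,4,6,7,8}" by (rule sm[OF finq]) auto
  have F95: "0 \<le> entropy q {6,8} + entropy q {7,8} - entropy q {6,7,8} - entropy q {8}" by (rule sm[OF finq]) auto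
  have F96: "0 \<le> entropy q {0,2,4,5,6,9,10} + entropy q {0,2,4,5,7,9,10} - entropy q {0,2,4,5,6,7,9,10} - entropy q {0,2,4,5,9,10}" by (rule sm[OF finq]) auto
  have F97: "0 \<le> entropy q {2,3,6} + entropy q {2,3,8} - entropy q {2,3,6,8} - entropy q {2,3}" by (rule sm[OF finq]) auto
  have F98: "0 \<le> entropy q {0,1,2,3,4,5,6,7,9,10} + entropy q {0,1,2,3,4,5,7,8,9,10} - entropy q {0,1,2,3,4,5,6,7,8,9,10} - entropy q {0,1,2,3,4,5,7,9,10}" by (rule sm[OF finq]) auto
  have F99: "0 \<le> entropy q {0,1,2,3,4,6,7} + entropy q {0,1,2,3,4,7,9,10} - entropy q {0,1,2,3,4,6,7,9,10} - entropy q {0,1,2,3,4,7}" by (rule sm[OF finq]) auto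
  have F100: "0 \<le> entropy q {0,2,5,6,7,8} + entropy q {0,2,5,7,8,9,10} - entropy q {0,2,5,6,7,8,9,10} - entropy q {0,2,5,7,8}" by (rule sm[OF finq]) auto
  have F101: "0 \<le> entropy q {0,1,2,3,4,5,6,7,8} + entropy q {0,1,2,3,4,5,7,8,9,10} - entropy q {0,1,2,3,4,5,6,7,8,9,10} - entropy q {0,1,2,3,4,5,7,8}" by (rule sm[OF finq]) auto
  have F102: "0 \<le> entropy q {2,7} + entropy q {2,9,10} - entropy q {2,7,9,10} - entropy q {2}" by (rule sm[OF finq]) auto
  have F103: "0 \<le> entropy q {3,4,7} + entropy q {3,4,9,10} - entropy q {3,4,7,9,10} - entropy q {3,4}" by (rule sm[OF finq]) auto
  have F104: "0 \<le> entropy q {0,3,4,5,7} + entropy q {0,3,4,5,9,10} - entropy q {0,3,4,5,7,9,10} - entropy q {0,3,4,5}" by (rule sm[OF finq]) auto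
  have F105: "0 \<le> entropy q {0,3,6,7,8} + entropy q {0,3,6,8,9,10} - entropy q {0,3,6,7,8,9,10} - entropy q {0,3,6,8}" by (rule sm[OF finq]) auto
  have F106: "0 \<le> entropy q {5,6,7,8} + entropy q {5,6,8,9,10} - entropy q {5,6,7,8,9,10} - entropy q {5,6,8}" by (rule sm[OF finq]) auto
  have F107: "0 \<le> entropy q {5,6,8} + entropy q {5,6,9,10} - entropy q {5,6,8,9,10} - entropy q {5,6}" by (rule sm[OF finq]) auto
  have F108: "0 \<le> entropy q {0,2,3,5,6,8} + entropy q {0,2,3,5,6,9,10} - entropy q {0,2,3,5,6,8,9,10} - entropy q {0,2,3,5,6}" by (rule sm[OF finq]) auto
  have F109: "0 \<le> entropy q {3,4,7,8} + entropy q {3,4,7,9,10} - entropy q {3,4,7,8,9,10} - entropy q {3,4,7}" by (rule sm[OF finq]) auto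
  have F110: "0 \<le> entropy q {0,1,2,3,4,6,7,8} + entropy q {0,1,2,3,4,6,7,9,10} - entropy q {0,1,2,3,4,6,7,8,9,10} - entropy q {0,1,2,3,4,6,7}" by (rule sm[OF finq]) auto
  have F111: "0 \<le> entropy q {0,2,3} - entropy q {2,3} - entropy q {0}" by (rule unq1[where X="{2,3}"]) (auto simp: nV vQ_def)
  have F112: "0 \<le> entropy q {0,2,4} - entropy q {2,4} - entropy q {0}" by (rule unq1[where X="{2,4}"]) (auto simp: nV vQ_def)
  have F113: "0 \<le> entropy q {2,3,4} - entropy q {0,2,3,4}" by (rule qu1[where X="{2,3,4}"]) (auto simp: yV)
  have F114: "0 \<le> entropy q {0,2,3,6} - entropy q {2,3,6} - entropy q {0}" by (rule unq1[where X="{2,3,6}"]) (auto simp: nV vQ_def)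
  have F115: "0 \<le> entropy q {0,2,3,7} - entropy q {2,3,7} - entropy q {0}" by (rule unq1[where X="{2,3,7}"]) (auto simp: nV vQ_def)
  have F116: "0 \<le> entropy q {2,5,6} - entropy q {0,2,5,6}" by (rule qu1[where X="{2,5,6}"]) (auto simp: yV)
  have F117: "0 \<le> entropy q {0,2,7,8} - entropy q {2,7,8} - entropy q {0}" by (rule unq1[where X="{2,7,8}"]) (auto simp: nV vQ_def)
  have F118: "0 \<le> entropy q {0,3,4,5} - entropy q {3,4,5} - entropy q {0}" by (rule unq1[where X="{3,4,5}"]) (auto simp: nV vQ_def)
  have F119: "0 \<le> entropy q {0,3,6,8} - entropy q {3,6,8} - entropy q {0}" by (rule unq1[where X="{3,6,8}"]) (auto simp: nV vQ_def)
  have F120: "0 \<le> entropy q {2,3,6,8} - entropy q {0,2,3,6,8}" by (rule qu1[where X="{2,3,6,8}"]) (auto simp: yV)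
  have F121: "0 \<le> entropy q {2,3,7,8} - entropy q {0,2,3,7,8}" by (rule qu1[where X="{2,3,7,8}"]) (auto simp: yV)
  have F122: "0 \<le> entropy q {0,3,4,5,6} - entropy q {3,4,5,6} - entropy q {0}" by (rule unq1[where X="{3,4,5,6}"]) (auto simp: nV vQ_def)
  have F123: "0 \<le> entropy q {3,4,5,7} - entropy q {0,3,4,5,7}" by (rule qu1[where X="{3,4,5,7}"]) (auto simp: yV)
  have F124: "0 \<le> entropy q {3,4,5,8} - entropy q {0,3,4,5,8}" by (rule qu1[where X="{3,4,5,8}"]) (auto simp: yV)
  have F125: "0 \<le> entropy q {0,3,4,7,8} - entropy q {3,4,7,8} - entropy q {0}" by (rule unq1[where X="{3,4,7,8}"]) (auto simp: nV vQ_def)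
  have F126: "0 \<le> entropy q {3,6,7,8} - entropy q {0,3,6,7,8}" by (rule qu1[where X="{3,6,7,8}"]) (auto simp: yV)
  have F127: "0 \<le> entropy q {0,5,6,7,8} - entropy q {5,6,7,8} - entropy q {0}" by (rule unq1[where X="{5,6,7,8}"]) (auto simp: nV vQ_def)
  have F128: "0 \<le> entropy q {3,9,10} - entropy q {0,2,3}" by (rule cp1[where W="{3}"]) (auto simp: Zc_def)
  have F129: "0 \<le> entropy q {4,9,10} - entropy q {0,2,4}" by (rule cp1[where W="{4}"]) (auto simp: Zc_def)
  have F130: "0 \<le> entropy q {0,2,3,4} - entropy q {3,4,9,10}" by (rule cp2[where W="{3,4}"]) (auto simp: Zc_def)
  have F131: "0 \<le> entropy q {0,2,5,6} - entropy q {5,6,9,10}" by (rule cp2[where W="{5,6}"]) (auto simp: Zc_def)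
  have F132: "0 \<le> entropy q {3,4,5,6,9,10} - entropy q {0,2,3,4,5,6}" by (rule cp1[where W="{3,4,5,6}"]) (auto simp: Zc_def)
  have F133: "0 \<le> entropy q {0,1,2,3,4,5,6,7,8,9,10} + entropy q {3,4,5,6} - entropy q {0,1,2,3,4,5,6,7,8} - entropy q {3,4,5,6,9,10}" using ci by linarith
  have G1: "0 \<le> (1/2) * entropy q {0,1,2,3,4,5,6,7,8,9,10} - (1/2) * entropy q {0,1,3,4,5,6,7,8,9,10}" using F1 by linarith
  have G2: "0 \<le> (1/8) * entropy q {0,1,2,3,4,5,6,7,8,9,10} - (1/8) * entropy q {0,1,2,4,5,6,7,8,9,10}" using F2 by linarith
  have G3: "0 \<le> (1/8) * entropy q {0,1,2,3,4,5,6,7,8,9,10} - (1/8) * entropy q {0,1,2,3,5,6,7,8,9,10}" using F3 by linarith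
  have G4: "0 \<le> (1/8) * entropy q {0,1,2,3,4,5,6,7,8,9,10} - (1/8) * entropy q {0,1,2,3,4,6,7,8,9,10}" using F4 by linarith
  have G5: "0 \<le> (1/8) * entropy q {0,1,2,3,4,5,6,7,8,9,10} - (1/8) * entropy q {0,1,2,3,4,5,7,8,9,10}" using F5 by linarith
  have G6: "0 \<le> (1/16) * entropy q {0,3,6,7,8,9,10} + (1/16) * entropy q {3,4,6,7,8,9,10} - (1/16) * entropy q {0,3,4,6,7,8,9,10} - (1/16) * entropy q {3,6,7,8,9,10}" using F6 by linarith
  have G7: "0 \<le> (1/16) * entropy q {0,3,6,7,8} + (1/16) * entropy q {3,5,6,7,8} - (1/16) * entropy q {0,3,5,6,7,8} - (1/16) * entropy q {3,6,7,8}" using F7 by linarith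
  have G8: "0 \<le> (1/16) * entropy q {0,2,3,4,5,7,8,9,10} + (1/16) * entropy q {2,3,4,5,6,7,8,9,10} - (1/16) * entropy q {0,2,3,4,5,6,7,8,9,10} - (1/16) * entropy q {2,3,4,5,7,8,9,10}" using F8 by linarith
  have G9: "0 \<le> (1/16) * entropy q {0,3,4,5,8} + (1/16) * entropy q {3,4,5,7,8} - (1/16) * entropy q {0,3,4,5,7,8} - (1/16) * entropy q {3,4,5,8}" using F9 by linarith
  have G10: "0 \<le> (1/8) * entropy q {0,2,8,9,10} + (1/8) * entropy q {2,7,8,9,10} - (1/8) * entropy q {0,2,7,8,9,10} - (1/8) * entropy q {2,8,9,10}" using F10 by linarith
  have G11: "0 \<le> (1/8) * entropy q {0,2,9,10} + (1/8) * entropy q {2,8,9,10} - (1/8) * entropy q {0,2,8,9,10} - (1/8) * entropy q {2,9,10}" using F11 by linarith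
  have G12: "0 \<le> (1/8) * entropy q {0,2,3,4} + (1/8) * entropy q {2,3,4,9,10} - (1/8) * entropy q {0,2,3,4,9,10} - (1/8) * entropy q {2,3,4}" using F12 by linarith
  have G13: "0 \<le> (1/8) * entropy q {0,2,5,6} + (1/8) * entropy q {2,5,6,9,10} - (1/8) * entropy q {0,2,5,6,9,10} - (1/8) * entropy q {2,5,6}" using F13 by linarith
  have G14: "0 \<le> (1/16) * entropy q {0,3,4,5,7,8} + (1/16) * entropy q {3,4,5,7,8,9,10} - (1/16) * entropy q {0,3,4,5,7,8,9,10} - (1/16) * entropy q {3,4,5,7,8}" using F14 by linarith
  have G15: "0 \<le> (1/16) * entropy q {0,3,5,6,7,8} + (1/16) * entropy q {3,5,6,7,8,9,10} - (1/16) * entropy q {0,3,5,6,7,8,9,10} - (1/16) * entropy q {3,5,6,7,8}" using F15 by linarith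
  have G16: "0 \<le> (1/16) * entropy q {0,1,5,6,7,8} + (1/16) * entropy q {0,2,5,6,7,8} - (1/16) * entropy q {0,1,2,5,6,7,8} - (1/16) * entropy q {0,5,6,7,8}" using F16 by linarith
  have G17: "0 \<le> (3/8) * entropy q {0,1,3,4,5,6,7,8} + (3/8) * entropy q {0,2,3,4,5,6,7,8} - (3/8) * entropy q {0,1,2,3,4,5,6,7,8} - (3/8) * entropy q {0,3,4,5,6,7,8}" using F17 by linarith
  have G18: "0 \<le> (1/16) * entropy q {0,1,3,4,7,8,9,10} + (1/16) * entropy q {0,2,3,4,7,8,9,10} - (1/16) * entropy q {0,1,2,3,4,7,8,9,10} - (1/16) * entropy q {0,3,4,7,8,9,10}" using F18 by linarith
  have G19: "0 \<le> (1/16) * entropy q {0,1,5,6,7,8} + (1/16) * entropy q {0,3,5,6,7,8} - (1/16) * entropy q {0,1,3,5,6,7,8} - (1/16) * entropy q {0,5,6,7,8}" using F19 by linarith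
  have G20: "0 \<le> (1/16) * entropy q {0,1,2,4,5,6,7,8,9,10} + (1/16) * entropy q {0,2,3,4,5,6,7,8,9,10} - (1/16) * entropy q {0,1,2,3,4,5,6,7,8,9,10} - (1/16) * entropy q {0,2,4,5,6,7,8,9,10}" using F20 by linarith
  have G21: "0 \<le> (1/16) * entropy q {0,1,3,5,6,7,8,9,10} + (1/16) * entropy q {0,3,4,5,6,7,8,9,10} - (1/16) * entropy q {0,1,3,4,5,6,7,8,9,10} - (1/16) * entropy q {0,3,5,6,7,8,9,10}" using F21 by linarith
  have G22: "0 \<le> (1/16) * entropy q {0,1,2,3,5,6,7,8,9,10} + (1/16) * entropy q {0,2,3,4,5,6,7,8,9,10} - (1/16) * entropy q {0,1,2,3,4,5,6,7,8,9,10} - (1/16) * entropy q {0,2,3,5,6,7,8,9,10}" using F22 by linarith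
  have G23: "0 \<le> (1/16) * entropy q {0,1,2,3,4,6,7,9,10} + (1/16) * entropy q {0,2,3,4,5,6,7,9,10} - (1/16) * entropy q {0,1,2,3,4,5,6,7,9,10} - (1/16) * entropy q {0,2,3,4,6,7,9,10}" using F23 by linarith
  have G24: "0 \<le> (1/16) * entropy q {0,1,2,3,4,6,8,9,10} + (1/16) * entropy q {0,2,3,4,5,6,8,9,10} - (1/16) * entropy q {0,1,2,3,4,5,6,8,9,10} - (1/16) * entropy q {0,2,3,4,6,8,9,10}" using F24 by linarith
  have G25: "0 \<le> (1/16) * entropy q {0,1,2,3,4,7} + (1/16) * entropy q {0,2,3,4,6,7} - (1/16) * entropy q {0,1,2,3,4,6,7} - (1/16) * entropy q {0,2,3,4,7}" using F25 by linarith
  have G26: "0 \<le> (1/16) * entropy q {0,1,2,3,4,5,7,8,9,10} + (1/16) * entropy q {0,2,3,4,5,6,7,8,9,10} - (1/16) * entropy q {0,1,2,3,4,5,6,7,8,9,10} - (1/16) * entropy q {0,2,3,4,5,7,8,9,10}" using F26 by linarith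
  have G27: "0 \<le> (1/16) * entropy q {0,1,2,3,4,6,7} + (1/16) * entropy q {0,2,3,4,6,7,9,10} - (1/16) * entropy q {0,1,2,3,4,6,7,9,10} - (1/16) * entropy q {0,2,3,4,6,7}" using F27 by linarith
  have G28: "0 \<le> (1/16) * entropy q {0,1,3,4,7,8} + (1/16) * entropy q {0,3,4,7,8,9,10} - (1/16) * entropy q {0,1,3,4,7,8,9,10} - (1/16) * entropy q {0,3,4,7,8}" using F28 by linarith
  have G29: "0 \<le> (3/16) * entropy q {0,1,2,5,6,7,8} + (3/16) * entropy q {0,2,5,6,7,8,9,10} - (3/16) * entropy q {0,1,2,5,6,7,8,9,10} - (3/16) * entropy q {0,2,5,6,7,8}" using F29 by linarith
  have G30: "0 \<le> (1/16) * entropy q {0,1,3,5,6,7,8} + (1/16) * entropy q {0,3,5,6,7,8,9,10} - (1/16) * entropy q {0,1,3,5,6,7,8,9,10} - (1/16) * entropy q {0,3,5,6,7,8}" using F30 by linarith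
  have G31: "0 \<le> (1/4) * entropy q {2,4} + (1/4) * entropy q {3,4} - (1/4) * entropy q {2,3,4} - (1/4) * entropy q {4}" using F31 by linarith
  have G32: "0 \<le> (1/8) * entropy q {0,1,2,5,6,7,8} + (1/8) * entropy q {0,1,3,5,6,7,8} - (1/8) * entropy q {0,1,2,3,5,6,7,8} - (1/8) * entropy q {0,1,5,6,7,8}" using F32 by linarith
  have G33: "0 \<le> (1/16) * entropy q {2,9,10} + (1/16) * entropy q {3,9,10} - (1/16) * entropy q {2,3,9,10} - (1/16) * entropy q {9,10}" using F33 by linarith
  have G34: "0 \<le> (3/16) * entropy q {2} + (3/16) * entropy q {4} - (3/16) * entropy q {2,4}" using F34 by linarith
  have G35: "0 \<le> (1/8) * entropy q {2,3,9,10} + (1/8) * entropy q {3,4,9,10} - (1/8) * entropy q {2,3,4,9,10} - (1/8) * entropy q {3,9,10}" using F35 by linarith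
  have G36: "0 \<le> (1/8) * entropy q {0,1,2,3,5,6,7,8,9,10} + (1/8) * entropy q {0,1,3,4,5,6,7,8,9,10} - (1/8) * entropy q {0,1,2,3,4,5,6,7,8,9,10} - (1/8) * entropy q {0,1,3,5,6,7,8,9,10}" using F36 by linarith
  have G37: "0 \<le> (1/4) * entropy q {2,6} + (1/4) * entropy q {5,6} - (1/4) * entropy q {2,5,6} - (1/4) * entropy q {6}" using F37 by linarith
  have G38: "0 \<le> (1/8) * entropy q {2,6,9,10} + (1/8) * entropy q {5,6,9,10} - (1/8) * entropy q {2,5,6,9,10} - (1/8) * entropy q {6,9,10}" using F38 by linarith
  have G39: "0 \<le> (1/16) * entropy q {0,2,3,4,6,8,9,10} + (1/16) * entropy q {0,3,4,5,6,8,9,10} - (1/16) * entropy q {0,2,3,4,5,6,8,9,10} - (1/16) * entropy q {0,3,4,6,8,9,10}" using F39 by linarith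
  have G40: "0 \<le> (1/16) * entropy q {0,1,2,3,4,6,7,8,9,10} + (1/16) * entropy q {0,1,3,4,5,6,7,8,9,10} - (1/16) * entropy q {0,1,2,3,4,5,6,7,8,9,10} - (1/16) * entropy q {0,1,3,4,6,7,8,9,10}" using F40 by linarith
  have G41: "0 \<le> (3/8) * entropy q {2} + (3/8) * entropy q {6} - (3/8) * entropy q {2,6}" using F41 by linarith
  have G42: "0 \<le> (1/16) * entropy q {0,1,2,3,4,7,8} + (1/16) * entropy q {0,1,3,4,6,7,8} - (1/16) * entropy q {0,1,2,3,4,6,7,8} - (1/16) * entropy q {0,1,3,4,7,8}" using F42 by linarith
  have G43: "0 \<le> (1/16) * entropy q {2,3,5,7,8,9,10} + (1/16) * entropy q {3,5,6,7,8,9,10} - (1/16) * entropy q {2,3,5,6,7,8,9,10} - (1/16) * entropy q {3,5,7,8,9,10}" using F43 by linarith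
  have G44: "0 \<le> (3/8) * entropy q {0,2,3,4,5,6,8} + (3/8) * entropy q {0,3,4,5,6,7,8} - (3/8) * entropy q {0,2,3,4,5,6,7,8} - (3/8) * entropy q {0,3,4,5,6,8}" using F44 by linarith
  have G45: "0 \<le> (1/16) * entropy q {0,2,3,4,5,9,10} + (1/16) * entropy q {0,3,4,5,7,9,10} - (1/16) * entropy q {0,2,3,4,5,7,9,10} - (1/16) * entropy q {0,3,4,5,9,10}" using F45 by linarith
  have G46: "0 \<le> (1/16) * entropy q {0,2,3,5,6,8,9,10} + (1/16) * entropy q {0,3,5,6,7,8,9,10} - (1/16) * entropy q {0,2,3,5,6,7,8,9,10} - (1/16) * entropy q {0,3,5,6,8,9,10}" using F46 by linarith
  have G47: "0 \<le> (1/16) * entropy q {2,3} + (1/16) * entropy q {3,8} - (1/16) * entropy q {2,3,8} - (1/16) * entropy q {3}" using F47 by linarith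
  have G48: "0 \<le> (3/8) * entropy q {0,2,3,4,5,6} + (3/8) * entropy q {0,3,4,5,6,8} - (3/8) * entropy q {0,2,3,4,5,6,8} - (3/8) * entropy q {0,3,4,5,6}" using F48 by linarith
  have G49: "0 \<le> (1/16) * entropy q {2,7,9,10} + (1/16) * entropy q {7,8,9,10} - (1/16) * entropy q {2,7,8,9,10} - (1/16) * entropy q {7,9,10}" using F49 by linarith
  have G50: "0 \<le> (1/16) * entropy q {2,3} + (1/16) * entropy q {3,9,10} - (1/16) * entropy q {2,3,9,10} - (1/16) * entropy q {3}" using F50 by linarith
  have G51: "0 \<le> (1/8) * entropy q {2,6} + (1/8) * entropy q {6,9,10} - (1/8) * entropy q {2,6,9,10} - (1/8) * entropy q {6}" using F51 by linarith
  have G52: "0 \<le> (1/16) * entropy q {2,7,8} + (1/16) * entropy q {7,8,9,10} - (1/16) * entropy q {2,7,8,9,10} - (1/16) * entropy q {7,8}" using F52 by linarith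
  have G53: "0 \<le> (1/16) * entropy q {0,2,3,4,7,8} + (1/16) * entropy q {0,3,4,7,8,9,10} - (1/16) * entropy q {0,2,3,4,7,8,9,10} - (1/16) * entropy q {0,3,4,7,8}" using F53 by linarith
  have G54: "0 \<le> (1/8) * entropy q {0,1,2,3,5,6,7,8} + (1/8) * entropy q {0,1,3,5,6,7,8,9,10} - (1/8) * entropy q {0,1,2,3,5,6,7,8,9,10} - (1/8) * entropy q {0,1,3,5,6,7,8}" using F54 by linarith
  have G55: "0 \<le> (7/16) * entropy q {0,1,2,3,4,5,6,7,8} + (7/16) * entropy q {0,1,3,4,5,6,7,8,9,10} - (7/16) * entropy q {0,1,2,3,4,5,6,7,8,9,10} - (7/16) * entropy q {0,1,3,4,5,6,7,8}" using F55 by linarith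
  have G56: "0 \<le> (1/8) * entropy q {3} + (1/8) * entropy q {4} - (1/8) * entropy q {3,4}" using F56 by linarith
  have G57: "0 \<le> (1/16) * entropy q {0,2,3,5,6,7,8,9,10} + (1/16) * entropy q {0,2,4,5,6,7,8,9,10} - (1/16) * entropy q {0,2,3,4,5,6,7,8,9,10} - (1/16) * entropy q {0,2,5,6,7,8,9,10}" using F57 by linarith
  have G58: "0 \<le> (1/16) * entropy q {0,1,2,3,5,6,7,8,9,10} + (1/16) * entropy q {0,1,2,4,5,6,7,8,9,10} - (1/16) * entropy q {0,1,2,3,4,5,6,7,8,9,10} - (1/16) * entropy q {0,1,2,5,6,7,8,9,10}" using F58 by linarith
  have G59: "0 \<le> (1/8) * entropy q {0,2,3,9,10} + (1/8) * entropy q {0,2,5,9,10} - (1/8) * entropy q {0,2,3,5,9,10} - (1/8) * entropy q {0,2,9,10}" using F59 by linarith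
  have G60: "0 \<le> (1/8) * entropy q {3,6,7,8,9,10} + (1/8) * entropy q {5,6,7,8,9,10} - (1/8) * entropy q {3,5,6,7,8,9,10} - (1/8) * entropy q {6,7,8,9,10}" using F60 by linarith
  have G61: "0 \<le> (1/16) * entropy q {0,2,3,5,9,10} + (1/16) * entropy q {0,2,5,6,9,10} - (1/16) * entropy q {0,2,3,5,6,9,10} - (1/16) * entropy q {0,2,5,9,10}" using F61 by linarith
  have G62: "0 \<le> (1/16) * entropy q {0,2,3,4,5,7,9,10} + (1/16) * entropy q {0,2,4,5,6,7,9,10} - (1/16) * entropy q {0,2,3,4,5,6,7,9,10} - (1/16) * entropy q {0,2,4,5,7,9,10}" using F62 by linarith
  have G63: "0 \<le> (1/16) * entropy q {3,7,8,9,10} + (1/16) * entropy q {6,7,8,9,10} - (1/16) * entropy q {3,6,7,8,9,10} - (1/16) * entropy q {7,8,9,10}" using F63 by linarith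
  have G64: "0 \<le> (1/16) * entropy q {3,4,7,8,9,10} + (1/16) * entropy q {4,6,7,8,9,10} - (1/16) * entropy q {3,4,6,7,8,9,10} - (1/16) * entropy q {4,7,8,9,10}" using F64 by linarith
  have G65: "0 \<le> (1/16) * entropy q {3,6,8} + (1/16) * entropy q {6,7,8} - (1/16) * entropy q {3,6,7,8} - (1/16) * entropy q {6,8}" using F65 by linarith
  have G66: "0 \<le> (1/16) * entropy q {3,4,9,10} + (1/16) * entropy q {4,7,9,10} - (1/16) * entropy q {3,4,7,9,10} - (1/16) * entropy q {4,9,10}" using F66 by linarith
  have G67: "0 \<le> (1/16) * entropy q {3} + (1/16) * entropy q {8} - (1/16) * entropy q {3,8}" using F67 by linarith
  have G68: "0 \<le> (1/16) * entropy q {2,3,7} + (1/16) * entropy q {2,7,8} - (1/16) * entropy q {2,3,7,8} - (1/16) * entropy q {2,7}" using F68 by linarith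
  have G69: "0 \<le> (1/16) * entropy q {3} + (1/16) * entropy q {9,10} - (1/16) * entropy q {3,9,10}" using F69 by linarith
  have G70: "0 \<le> (1/4) * entropy q {0,1,2,3,5,6,7,8} + (1/4) * entropy q {0,1,2,5,6,7,8,9,10} - (1/4) * entropy q {0,1,2,3,5,6,7,8,9,10} - (1/4) * entropy q {0,1,2,5,6,7,8}" using F70 by linarith
  have G71: "0 \<le> (1/16) * entropy q {0,2,3,4,9,10} + (1/16) * entropy q {0,2,3,5,9,10} - (1/16) * entropy q {0,2,3,4,5,9,10} - (1/16) * entropy q {0,2,3,9,10}" using F71 by linarith
  have G72: "0 \<le> (1/16) * entropy q {0,3,4,6,8,9,10} + (1/16) * entropy q {0,3,5,6,8,9,10} - (1/16) * entropy q {0,3,4,5,6,8,9,10} - (1/16) * entropy q {0,3,6,8,9,10}" using F72 by linarith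
  have G73: "0 \<le> (1/16) * entropy q {0,2,3,4,6,8,9,10} + (1/16) * entropy q {0,2,3,5,6,8,9,10} - (1/16) * entropy q {0,2,3,4,5,6,8,9,10} - (1/16) * entropy q {0,2,3,6,8,9,10}" using F73 by linarith
  have G74: "0 \<le> (1/16) * entropy q {3,4,7,8,9,10} + (1/16) * entropy q {3,5,7,8,9,10} - (1/16) * entropy q {3,4,5,7,8,9,10} - (1/16) * entropy q {3,7,8,9,10}" using F74 by linarith
  have G75: "0 \<le> (1/16) * entropy q {0,2,4,5,9,10} + (1/16) * entropy q {0,2,5,6,9,10} - (1/16) * entropy q {0,2,4,5,6,9,10} - (1/16) * entropy q {0,2,5,9,10}" using F75 by linarith
  have G76: "0 \<le> (1/16) * entropy q {0,2,3,4,8,9,10} + (1/16) * entropy q {0,2,3,6,8,9,10} - (1/16) * entropy q {0,2,3,4,6,8,9,10} - (1/16) * entropy q {0,2,3,8,9,10}" using F76 by linarith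
  have G77: "0 \<le> (1/16) * entropy q {4,7,8,9,10} + (1/16) * entropy q {6,7,8,9,10} - (1/16) * entropy q {4,6,7,8,9,10} - (1/16) * entropy q {7,8,9,10}" using F77 by linarith
  have G78: "0 \<le> (1/16) * entropy q {2,3,4,5,7,8,9,10} + (1/16) * entropy q {2,3,5,6,7,8,9,10} - (1/16) * entropy q {2,3,4,5,6,7,8,9,10} - (1/16) * entropy q {2,3,5,7,8,9,10}" using F78 by linarith
  have G79: "0 \<le> (1/16) * entropy q {4} + (1/16) * entropy q {7} - (1/16) * entropy q {4,7}" using F79 by linarith
  have G80: "0 \<le> (1/16) * entropy q {0,2,3,4,5,6,8,9,10} + (1/16) * entropy q {0,2,3,5,6,7,8,9,10} - (1/16) * entropy q {0,2,3,4,5,6,7,8,9,10} - (1/16) * entropy q {0,2,3,5,6,8,9,10}" using F80 by linarith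
  have G81: "0 \<le> (1/16) * entropy q {0,2,3,4,7} + (1/16) * entropy q {0,2,3,7,8} - (1/16) * entropy q {0,2,3,4,7,8} - (1/16) * entropy q {0,2,3,7}" using F81 by linarith
  have G82: "0 \<le> (1/16) * entropy q {0,2,3,4,9,10} + (1/16) * entropy q {0,2,3,8,9,10} - (1/16) * entropy q {0,2,3,4,8,9,10} - (1/16) * entropy q {0,2,3,9,10}" using F82 by linarith
  have G83: "0 \<le> (1/16) * entropy q {4,7} + (1/16) * entropy q {7,9,10} - (1/16) * entropy q {4,7,9,10} - (1/16) * entropy q {7}" using F83 by linarith
  have G84: "0 \<le> (1/4) * entropy q {0,1,2,3,4,5,6,7,8} + (1/4) * entropy q {0,1,2,3,5,6,7,8,9,10} - (1/4) * entropy q {0,1,2,3,4,5,6,7,8,9,10} - (1/4) * entropy q {0,1,2,3,5,6,7,8}" using F84 by linarith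
  have G85: "0 \<le> (1/8) * entropy q {5} + (1/8) * entropy q {6} - (1/8) * entropy q {5,6}" using F85 by linarith
  have G86: "0 \<le> (1/16) * entropy q {0,3,4,5,7,8,9,10} + (1/16) * entropy q {0,3,4,6,7,8,9,10} - (1/16) * entropy q {0,3,4,5,6,7,8,9,10} - (1/16) * entropy q {0,3,4,7,8,9,10}" using F86 by linarith
  have G87: "0 \<le> (1/16) * entropy q {0,1,2,3,4,5,7,8,9,10} + (1/16) * entropy q {0,1,2,3,4,6,7,8,9,10} - (1/16) * entropy q {0,1,2,3,4,5,6,7,8,9,10} - (1/16) * entropy q {0,1,2,3,4,7,8,9,10}" using F87 by linarith
  have G88: "0 \<le> (1/16) * entropy q {3,4,5} + (1/16) * entropy q {3,4,7} - (1/16) * entropy q {3,4,5,7} - (1/16) * entropy q {3,4}" using F88 by linarith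
  have G89: "0 \<le> (1/16) * entropy q {0,1,2,3,4,5,6,8,9,10} + (1/16) * entropy q {0,1,2,3,4,6,7,8,9,10} - (1/16) * entropy q {0,1,2,3,4,5,6,7,8,9,10} - (1/16) * entropy q {0,1,2,3,4,6,8,9,10}" using F89 by linarith
  have G90: "0 \<le> (1/16) * entropy q {0,2,3,5,6} + (1/16) * entropy q {0,2,3,6,8} - (1/16) * entropy q {0,2,3,5,6,8} - (1/16) * entropy q {0,2,3,6}" using F90 by linarith
  have G91: "0 \<le> (1/16) * entropy q {0,1,2,3,4,5,7,9,10} + (1/16) * entropy q {0,1,2,3,4,7,8,9,10} - (1/16) * entropy q {0,1,2,3,4,5,7,8,9,10} - (1/16) * entropy q {0,1,2,3,4,7,9,10}" using F91 by linarith
  have G92: "0 \<le> (1/8) * entropy q {0,2,5,7,8} + (1/8) * entropy q {0,2,7,8,9,10} - (1/8) * entropy q {0,2,5,7,8,9,10} - (1/8) * entropy q {0,2,7,8}" using F92 by linarith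
  have G93: "0 \<le> (1/16) * entropy q {0,1,2,3,4,5,7,8} + (1/16) * entropy q {0,1,2,3,4,7,8,9,10} - (1/16) * entropy q {0,1,2,3,4,5,7,8,9,10} - (1/16) * entropy q {0,1,2,3,4,7,8}" using F93 by linarith
  have G94: "0 \<le> (1/16) * entropy q {0,1,3,4,5,6,7,8} + (1/16) * entropy q {0,1,3,4,6,7,8,9,10} - (1/16) * entropy q {0,1,3,4,5,6,7,8,9,10} - (1/16) * entropy q {0,1,3,4,6,7,8}" using F94 by linarith
  have G95: "0 \<le> (1/16) * entropy q {6,8} + (1/16) * entropy q {7,8} - (1/16) * entropy q {6,7,8} - (1/16) * entropy q {8}" using F95 by linarith
  have G96: "0 \<le> (1/16) * entropy q {0,2,4,5,6,9,10} + (1/16) * entropy q {0,2,4,5,7,9,10} - (1/16) * entropy q {0,2,4,5,6,7,9,10} - (1/16) * entropy q {0,2,4,5,9,10}" using F96 by linarith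
  have G97: "0 \<le> (1/16) * entropy q {2,3,6} + (1/16) * entropy q {2,3,8} - (1/16) * entropy q {2,3,6,8} - (1/16) * entropy q {2,3}" using F97 by linarith
  have G98: "0 \<le> (1/16) * entropy q {0,1,2,3,4,5,6,7,9,10} + (1/16) * entropy q {0,1,2,3,4,5,7,8,9,10} - (1/16) * entropy q {0,1,2,3,4,5,6,7,8,9,10} - (1/16) * entropy q {0,1,2,3,4,5,7,9,10}" using F98 by linarith
  have G99: "0 \<le> (1/16) * entropy q {0,1,2,3,4,6,7} + (1/16) * entropy q {0,1,2,3,4,7,9,10} - (1/16) * entropy q {0,1,2,3,4,6,7,9,10} - (1/16) * entropy q {0,1,2,3,4,7}" using F99 by linarith
  have G100: "0 \<le> (1/8) * entropy q {0,2,5,6,7,8} + (1/8) * entropy q {0,2,5,7,8,9,10} - (1/8) * entropy q {0,2,5,6,7,8,9,10} - (1/8) * entropy q {0,2,5,7,8}" using F100 by linarith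
  have G101: "0 \<le> (1/16) * entropy q {0,1,2,3,4,5,6,7,8} + (1/16) * entropy q {0,1,2,3,4,5,7,8,9,10} - (1/16) * entropy q {0,1,2,3,4,5,6,7,8,9,10} - (1/16) * entropy q {0,1,2,3,4,5,7,8}" using F101 by linarith
  have G102: "0 \<le> (1/16) * entropy q {2,7} + (1/16) * entropy q {2,9,10} - (1/16) * entropy q {2,7,9,10} - (1/16) * entropy q {2}" using F102 by linarith
  have G103: "0 \<le> (1/16) * entropy q {3,4,7} + (1/16) * entropy q {3,4,9,10} - (1/16) * entropy q {3,4,7,9,10} - (1/16) * entropy q {3,4}" using F103 by linarith
  have G104: "0 \<le> (1/16) * entropy q {0,3,4,5,7} + (1/16) * entropy q {0,3,4,5,9,10} - (1/16) * entropy q {0,3,4,5,7,9,10} - (1/16) * entropy q {0,3,4,5}" using F104 by linarith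
  have G105: "0 \<le> (1/16) * entropy q {0,3,6,7,8} + (1/16) * entropy q {0,3,6,8,9,10} - (1/16) * entropy q {0,3,6,7,8,9,10} - (1/16) * entropy q {0,3,6,8}" using F105 by linarith
  have G106: "0 \<le> (1/8) * entropy q {5,6,7,8} + (1/8) * entropy q {5,6,8,9,10} - (1/8) * entropy q {5,6,7,8,9,10} - (1/8) * entropy q {5,6,8}" using F106 by linarith
  have G107: "0 \<le> (1/8) * entropy q {5,6,8} + (1/8) * entropy q {5,6,9,10} - (1/8) * entropy q {5,6,8,9,10} - (1/8) * entropy q {5,6}" using F107 by linarith
  have G108: "0 \<le> (1/16) * entropy q {0,2,3,5,6,8} + (1/16) * entropy q {0,2,3,5,6,9,10} - (1/16) * entropy q {0,2,3,5,6,8,9,10} - (1/16) * entropy q {0,2,3,5,6}" using F108 by linarith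
  have G109: "0 \<le> (1/8) * entropy q {3,4,7,8} + (1/8) * entropy q {3,4,7,9,10} - (1/8) * entropy q {3,4,7,8,9,10} - (1/8) * entropy q {3,4,7}" using F109 by linarith
  have G110: "0 \<le> (1/16) * entropy q {0,1,2,3,4,6,7,8} + (1/16) * entropy q {0,1,2,3,4,6,7,9,10} - (1/16) * entropy q {0,1,2,3,4,6,7,8,9,10} - (1/16) * entropy q {0,1,2,3,4,6,7}" using F110 by linarith
  have G111: "0 \<le> (1/16) * entropy q {0,2,3} - (1/16) * entropy q {2,3} - (1/16) * entropy q {0}" using F111 by linarith
  have G112: "0 \<le> (1/16) * entropy q {0,2,4} - (1/16) * entropy q {2,4} - (1/16) * entropy q {0}" using F112 by linarith
  have G113: "0 \<le> (3/8) * entropy q {2,3,4} - (3/8) * entropy q {0,2,3,4}" using F113 by linarith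
  have G114: "0 \<le> (1/16) * entropy q {0,2,3,6} - (1/16) * entropy q {2,3,6} - (1/16) * entropy q {0}" using F114 by linarith
  have G115: "0 \<le> (1/16) * entropy q {0,2,3,7} - (1/16) * entropy q {2,3,7} - (1/16) * entropy q {0}" using F115 by linarith
  have G116: "0 \<le> (3/8) * entropy q {2,5,6} - (3/8) * entropy q {0,2,5,6}" using F116 by linarith
  have G117: "0 \<le> (1/8) * entropy q {0,2,7,8} - (1/8) * entropy q {2,7,8} - (1/8) * entropy q {0}" using F117 by linarith
  have G118: "0 \<le> (1/16) * entropy q {0,3,4,5} - (1/16) * entropy q {3,4,5} - (1/16) * entropy q {0}" using F118 by linarith
  have G119: "0 \<le> (1/16) * entropy q {0,3,6,8} - (1/16) * entropy q {3,6,8} - (1/16) * entropy q {0}" using F119 by linarith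
  have G120: "0 \<le> (1/16) * entropy q {2,3,6,8} - (1/16) * entropy q {0,2,3,6,8}" using F120 by linarith
  have G121: "0 \<le> (1/16) * entropy q {2,3,7,8} - (1/16) * entropy q {0,2,3,7,8}" using F121 by linarith
  have G122: "0 \<le> (3/8) * entropy q {0,3,4,5,6} - (3/8) * entropy q {3,4,5,6} - (3/8) * entropy q {0}" using F122 by linarith
  have G123: "0 \<le> (1/16) * entropy q {3,4,5,7} - (1/16) * entropy q {0,3,4,5,7}" using F123 by linarith
  have G124: "0 \<le> (1/16) * entropy q {3,4,5,8} - (1/16) * entropy q {0,3,4,5,8}" using F124 by linarith
  have G125: "0 \<le> (1/8) * entropy q {0,3,4,7,8} - (1/8) * entropy q {3,4,7,8} - (1/8) * entropy q {0}" using F125 by linarith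
  have G126: "0 \<le> (1/8) * entropy q {3,6,7,8} - (1/8) * entropy q {0,3,6,7,8}" using F126 by linarith
  have G127: "0 \<le> (1/8) * entropy q {0,5,6,7,8} - (1/8) * entropy q {5,6,7,8} - (1/8) * entropy q {0}" using F127 by linarith
  have G128: "0 \<le> (1/16) * entropy q {3,9,10} - (1/16) * entropy q {0,2,3}" using F128 by linarith
  have G129: "0 \<le> (1/16) * entropy q {4,9,10} - (1/16) * entropy q {0,2,4}" using F129 by linarith
  have G130: "0 \<le> (1/4) * entropy q {0,2,3,4} - (1/4) * entropy q {3,4,9,10}" using F130 by linarith
  have G131: "0 \<le> (1/4) * entropy q {0,2,5,6} - (1/4) * entropy q {5,6,9,10}" using F131 by linarith
  have G132: "0 \<le> (3/8) * entropy q {3,4,5,6,9,10} - (3/8) * entropy q {0,2,3,4,5,6}" using F132 by linarith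
  have G133: "0 \<le> (3/8) * entropy q {0,1,2,3,4,5,6,7,8,9,10} + (3/8) * entropy q {3,4,5,6} - (3/8) * entropy q {0,1,2,3,4,5,6,7,8} - (3/8) * entropy q {3,4,5,6,9,10}" using F133 by linarith
  have S: "0 \<le> ((1/2) * entropy q {0,1,2,3,4,5,6,7,8,9,10} - (1/2) * entropy q {0,1,3,4,5,6,7,8,9,10}) + ((1/8) * entropy q {0,1,2,3,4,5,6,7,8,9,10} - (1/8) * entropy q {0,1,2,4,5,6,7,8,9,10}) + ((1/8) * entropy q {0,1,2,3,4,5,6,7,8,9,10} - (1/8) * entropy q {0,1,2,3,5,6,7,8,9,10}) + ((1/8) * entropy q {0,1,2,3,4,5,6,7,8,9,10} - (1/8) * entropy q {0,1,2,3,4,6,7,8,9,10}) + ((1/8) * entropy q {0,1,2,3,4,5,6,7,8,9,10} - (1/8) * entropy q {0,1,2,3,4,5,7,8,9,10}) + ((1/16) * entropy q {0,3,6,7,8,9,10} + (1/16) * entropy q {3,4,6,7,8,9,10} - (1/16) * entropy q {0,3,4,6,7,8,9,10} - (1/16) * entropy q {3,6,7,8,9,10}) + ((1/16) * entropy q {0,3,6,7,8} + (1/16) * entropy q {3,5,6,7,8} - (1/16) * entropy q {0,3,5,6,7,8} - (1/16) * entropy q {3,6,7,8}) + ((1/16) * entropy q {0,2,3,4,5,7,8,9,10} + (1/16) * entropy q {2,3,4,5,6,7,8,9,10} - (1/16) * entropy q {0,2,3,4,5,6,7,8,9,10} - (1/16) * entropy q {2,3,4,5,7,8,9,10}) + ((1/16)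 * entropy q {0,3,4,5,8} + (1/16) * entropy q {3,4,5,7,8} - (1/16) * entropy q {0,3,4,5,7,8} - (1/16) * entropy q {3,4,5,8}) + ((1/8) * entropy q {0,2,8,9,10} + (1/8) * entropy q {2,7,8,9,10} - (1/8) * entropy q {0,2,7,8,9,10} - (1/8) * entropy q {2,8,9,10}) + ((1/8) * entropy q {0,2,9,10} + (1/8) * entropy q {2,8,9,10} - (1/8) * entropy q {0,2,8,9,10} - (1/8) * entropy q {2,9,10}) + ((1/8) * entropy q {0,2,3,4} + (1/8) * entropy q {2,3,4,9,10} - (1/8) * entropy q {0,2,3,4,9,10} - (1/8) * entropy q {2,3,4}) + ((1/8) * entropy q {0,2,5,6} + (1/8) * entropy q {2,5,6,9,10} - (1/8) * entropy q {0,2,5,6,9,10} - (1/8) * entropy q {2,5,6}) + ((1/16) * entropy q {0,3,4,5,7,8} + (1/16) * entropy q {3,4,5,7,8,9,10} - (1/16) * entropy q {0,3,4,5,7,8,9,10} - (1/16) * entropy q {3,4,5,7,8}) + ((1/16) * entropy q {0,3,5,6,7,8} + (1/16) * entropy q {3,5,6,7,8,9,10} - (1/16) * entropy q {0,3,5,6,7,8,9,10} - (1/16) * entropy q {3,5,6,7,8}) + ((1/16) * entropy q {0,1,5,6,7,8} + (1/16) * entropy q {0,2,5,6,7,8} - (1/16) * entropy q {0,1,2,5,6,7,8} - (1/16) * entropy q {0,5,6,7,8}) + ((3/8) * entropy q {0,1,3,4,5,6,7,8} + (3/8) * entropy q {0,2,3,4,5,6,7,8} - (3/8) * entropy q {0,1,2,3,4,5,6,7,8}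 - (3/8) * entropy q {0,3,4,5,6,7,8}) + ((1/16) * entropy q {0,1,3,4,7,8,9,10} + (1/16) * entropy q {0,2,3,4,7,8,9,10} - (1/16) * entropy q {0,1,2,3,4,7,8,9,10} - (1/16) * entropy q {0,3,4,7,8,9,10}) + ((1/16) * entropy q {0,1,5,6,7,8} + (1/16) * entropy q {0,3,5,6,7,8} - (1/16) * entropy q {0,1,3,5,6,7,8} - (1/16) * entropy q {0,5,6,7,8}) + ((1/16) * entropy q {0,1,2,4,5,6,7,8,9,10} + (1/16) * entropy q {0,2,3,4,5,6,7,8,9,10} - (1/16) * entropy q {0,1,2,3,4,5,6,7,8,9,10} - (1/16) * entropy q {0,2,4,5,6,7,8,9,10}) + ((1/16) * entropy q {0,1,3,5,6,7,8,9,10} + (1/16) * entropy q {0,3,4,5,6,7,8,9,10} - (1/16) * entropy q {0,1,3,4,5,6,7,8,9,10} - (1/16) * entropy q {0,3,5,6,7,8,9,10}) + ((1/16) * entropy q {0,1,2,3,5,6,7,8,9,10} + (1/16) * entropy q {0,2,3,4,5,6,7,8,9,10} - (1/16) * entropy q {0,1,2,3,4,5,6,7,8,9,10} - (1/16) * entropy q {0,2,3,5,6,7,8,9,10}) + ((1/16) * entropy q {0,1,2,3,4,6,7,9,10} + (1/16) * entropy q {0,2,3,4,5,6,7,9,10} - (1/16) * entropy q {0,1,2,3,4,5,6,7,9,10} - (1/16) * entropy q {0,2,3,4,6,7,9,10}) + ((1/16) * entropy q {0,1,2,3,4,6,8,9,10} + (1/16) * entropy q {0,2,3,4,5,6,8,9,10}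 - (1/16) * entropy q {0,1,2,3,4,5,6,8,9,10} - (1/16) * entropy q {0,2,3,4,6,8,9,10}) + ((1/16) * entropy q {0,1,2,3,4,7} + (1/16) * entropy q {0,2,3,4,6,7} - (1/16) * entropy q {0,1,2,3,4,6,7} - (1/16) * entropy q {0,2,3,4,7}) + ((1/16) * entropy q {0,1,2,3,4,5,7,8,9,10} + (1/16) * entropy q {0,2,3,4,5,6,7,8,9,10} - (1/16) * entropy q {0,1,2,3,4,5,6,7,8,9,10} - (1/16) * entropy q {0,2,3,4,5,7,8,9,10}) + ((1/16) * entropy q {0,1,2,3,4,6,7} + (1/16) * entropy q {0,2,3,4,6,7,9,10} - (1/16) * entropy q {0,1,2,3,4,6,7,9,10} - (1/16) * entropy q {0,2,3,4,6,7}) + ((1/16) * entropy q {0,1,3,4,7,8} + (1/16) * entropy q {0,3,4,7,8,9,10} - (1/16) * entropy q {0,1,3,4,7,8,9,10} - (1/16) * entropy q {0,3,4,7,8}) + ((3/16) * entropy q {0,1,2,5,6,7,8} + (3/16) * entropy q {0,2,5,6,7,8,9,10} - (3/16) * entropy q {0,1,2,5,6,7,8,9,10} - (3/16) * entropy q {0,2,5,6,7,8}) + ((1/16) * entropy q {0,1,3,5,6,7,8} + (1/16) * entropy q {0,3,5,6,7,8,9,10} - (1/16) * entropy q {0,1,3,5,6,7,8,9,10} - (1/16) * entropy q {0,3,5,6,7,8}) + ((1/4) * entropy q {2,4} + (1/4) * entropy q {3,4} - (1/4) * entropy q {2,3,4} - (1/4) * entropy q {4}) + ((1/8) * entropy q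 {0,1,2,5,6,7,8} + (1/8) * entropy q {0,1,3,5,6,7,8} - (1/8) * entropy q {0,1,2,3,5,6,7,8} - (1/8) * entropy q {0,1,5,6,7,8}) + ((1/16) * entropy q {2,9,10} + (1/16) * entropy q {3,9,10} - (1/16) * entropy q {2,3,9,10} - (1/16) * entropy q {9,10}) + ((3/16) * entropy q {2} + (3/16) * entropy q {4} - (3/16) * entropy q {2,4}) + ((1/8) * entropy q {2,3,9,10} + (1/8) * entropy q {3,4,9,10} - (1/8) * entropy q {2,3,4,9,10} - (1/8) * entropy q {3,9,10}) + ((1/8) * entropy q {0,1,2,3,5,6,7,8,9,10} + (1/8) * entropy q {0,1,3,4,5,6,7,8,9,10} - (1/8) * entropy q {0,1,2,3,4,5,6,7,8,9,10} - (1/8) * entropy q {0,1,3,5,6,7,8,9,10}) + ((1/4) * entropy q {2,6} + (1/4) * entropy q {5,6} - (1/4) * entropy q {2,5,6} - (1/4) * entropy q {6}) + ((1/8) * entropy q {2,6,9,10} + (1/8) * entropy q {5,6,9,10} - (1/8) * entropy q {2,5,6,9,10} - (1/8) * entropy q {6,9,10}) + ((1/16) * entropy q {0,2,3,4,6,8,9,10} + (1/16) * entropy q {0,3,4,5,6,8,9,10} - (1/16) * entropy q {0,2,3,4,5,6,8,9,10} - (1/16) * entropy q {0,3,4,6,8,9,10}) + ((1/16) * entropy q {0,1,2,3,4,6,7,8,9,10} + (1/16) * entropy q {0,1,3,4,5,6,7,8,9,10} - (1/16) * entropy q {0,1,2,3,4,5,6,7,8,9,10} - (1/16) * entropy q {0,1,3,4,6,7,8,9,10})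 + ((3/8) * entropy q {2} + (3/8) * entropy q {6} - (3/8) * entropy q {2,6}) + ((1/16) * entropy q {0,1,2,3,4,7,8} + (1/16) * entropy q {0,1,3,4,6,7,8} - (1/16) * entropy q {0,1,2,3,4,6,7,8} - (1/16) * entropy q {0,1,3,4,7,8}) + ((1/16) * entropy q {2,3,5,7,8,9,10} + (1/16) * entropy q {3,5,6,7,8,9,10} - (1/16) * entropy q {2,3,5,6,7,8,9,10} - (1/16) * entropy q {3,5,7,8,9,10}) + ((3/8) * entropy q {0,2,3,4,5,6,8} + (3/8) * entropy q {0,3,4,5,6,7,8} - (3/8) * entropy q {0,2,3,4,5,6,7,8} - (3/8) * entropy q {0,3,4,5,6,8}) + ((1/16) * entropy q {0,2,3,4,5,9,10} + (1/16) * entropy q {0,3,4,5,7,9,10} - (1/16) * entropy q {0,2,3,4,5,7,9,10} - (1/16) * entropy q {0,3,4,5,9,10}) + ((1/16) * entropy q {0,2,3,5,6,8,9,10} + (1/16) * entropy q {0,3,5,6,7,8,9,10} - (1/16) * entropy q {0,2,3,5,6,7,8,9,10} - (1/16) * entropy q {0,3,5,6,8,9,10}) + ((1/16) * entropy q {2,3} + (1/16) * entropy q {3,8} - (1/16) * entropy q {2,3,8} - (1/16) * entropy q {3}) + ((3/8) * entropy q {0,2,3,4,5,6} + (3/8) * entropy q {0,3,4,5,6,8} - (3/8) * entropy q {0,2,3,4,5,6,8} - (3/8) * entropy q {0,3,4,5,6}) + ((1/16) * entropy q {2,7,9,10} + (1/16) * entropy q {7,8,9,10} - (1/16) * entropy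 q {2,7,8,9,10} - (1/16) * entropy q {7,9,10}) + ((1/16) * entropy q {2,3} + (1/16) * entropy q {3,9,10} - (1/16) * entropy q {2,3,9,10} - (1/16) * entropy q {3}) + ((1/8) * entropy q {2,6} + (1/8) * entropy q {6,9,10} - (1/8) * entropy q {2,6,9,10} - (1/8) * entropy q {6}) + ((1/16) * entropy q {2,7,8} + (1/16) * entropy q {7,8,9,10} - (1/16) * entropy q {2,7,8,9,10} - (1/16) * entropy q {7,8}) + ((1/16) * entropy q {0,2,3,4,7,8} + (1/16) * entropy q {0,3,4,7,8,9,10} - (1/16) * entropy q {0,2,3,4,7,8,9,10} - (1/16) * entropy q {0,3,4,7,8}) + ((1/8) * entropy q {0,1,2,3,5,6,7,8} + (1/8) * entropy q {0,1,3,5,6,7,8,9,10} - (1/8) * entropy q {0,1,2,3,5,6,7,8,9,10} - (1/8) * entropy q {0,1,3,5,6,7,8}) + ((7/16) * entropy q {0,1,2,3,4,5,6,7,8} + (7/16) * entropy q {0,1,3,4,5,6,7,8,9,10} - (7/16) * entropy q {0,1,2,3,4,5,6,7,8,9,10} - (7/16) * entropy q {0,1,3,4,5,6,7,8}) + ((1/8) * entropy q {3} + (1/8) * entropy q {4} - (1/8) * entropy q {3,4}) + ((1/16) * entropy q {0,2,3,5,6,7,8,9,10} + (1/16) * entropy q {0,2,4,5,6,7,8,9,10} - (1/16) * entropy q {0,2,3,4,5,6,7,8,9,10} - (1/16) * entropy q {0,2,5,6,7,8,9,10}) + ((1/16) * entropy q {0,1,2,3,5,6,7,8,9,10} + (1/16)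 * entropy q {0,1,2,4,5,6,7,8,9,10} - (1/16) * entropy q {0,1,2,3,4,5,6,7,8,9,10} - (1/16) * entropy q {0,1,2,5,6,7,8,9,10}) + ((1/8) * entropy q {0,2,3,9,10} + (1/8) * entropy q {0,2,5,9,10} - (1/8) * entropy q {0,2,3,5,9,10} - (1/8) * entropy q {0,2,9,10}) + ((1/8) * entropy q {3,6,7,8,9,10} + (1/8) * entropy q {5,6,7,8,9,10} - (1/8) * entropy q {3,5,6,7,8,9,10} - (1/8) * entropy q {6,7,8,9,10}) + ((1/16) * entropy q {0,2,3,5,9,10} + (1/16) * entropy q {0,2,5,6,9,10} - (1/16) * entropy q {0,2,3,5,6,9,10} - (1/16) * entropy q {0,2,5,9,10}) + ((1/16) * entropy q {0,2,3,4,5,7,9,10} + (1/16) * entropy q {0,2,4,5,6,7,9,10} - (1/16) * entropy q {0,2,3,4,5,6,7,9,10} - (1/16) * entropy q {0,2,4,5,7,9,10}) + ((1/16) * entropy q {3,7,8,9,10} + (1/16) * entropy q {6,7,8,9,10} - (1/16) * entropy q {3,6,7,8,9,10} - (1/16) * entropy q {7,8,9,10}) + ((1/16) * entropy q {3,4,7,8,9,10} + (1/16) * entropy q {4,6,7,8,9,10} - (1/16) * entropy q {3,4,6,7,8,9,10} - (1/16) * entropy q {4,7,8,9,10}) + ((1/16) * entropy q {3,6,8} + (1/16) * entropy q {6,7,8} - (1/16) * entropy q {3,6,7,8} - (1/16) * entropy q {6,8}) + ((1/16) * entropy q {3,4,9,10} + (1/16) * entropy q {4,7,9,10} - (1/16)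 * entropy q {3,4,7,9,10} - (1/16) * entropy q {4,9,10}) + ((1/16) * entropy q {3} + (1/16) * entropy q {8} - (1/16) * entropy q {3,8}) + ((1/16) * entropy q {2,3,7} + (1/16) * entropy q {2,7,8} - (1/16) * entropy q {2,3,7,8} - (1/16) * entropy q {2,7}) + ((1/16) * entropy q {3} + (1/16) * entropy q {9,10} - (1/16) * entropy q {3,9,10}) + ((1/4) * entropy q {0,1,2,3,5,6,7,8} + (1/4) * entropy q {0,1,2,5,6,7,8,9,10} - (1/4) * entropy q {0,1,2,3,5,6,7,8,9,10} - (1/4) * entropy q {0,1,2,5,6,7,8}) + ((1/16) * entropy q {0,2,3,4,9,10} + (1/16) * entropy q {0,2,3,5,9,10} - (1/16) * entropy q {0,2,3,4,5,9,10} - (1/16) * entropy q {0,2,3,9,10}) + ((1/16) * entropy q {0,3,4,6,8,9,10} + (1/16) * entropy q {0,3,5,6,8,9,10} - (1/16) * entropy q {0,3,4,5,6,8,9,10} - (1/16) * entropy q {0,3,6,8,9,10}) + ((1/16) * entropy q {0,2,3,4,6,8,9,10} + (1/16) * entropy q {0,2,3,5,6,8,9,10} - (1/16) * entropy q {0,2,3,4,5,6,8,9,10} - (1/16) * entropy q {0,2,3,6,8,9,10}) + ((1/16) * entropy q {3,4,7,8,9,10} + (1/16) * entropy q {3,5,7,8,9,10} - (1/16) * entropy q {3,4,5,7,8,9,10} - (1/16) * entropy q {3,7,8,9,10}) + ((1/16) * entropy q {0,2,4,5,9,10} + (1/16) * entropy q {0,2,5,6,9,10} - (1/16) * entropy q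 {0,2,4,5,6,9,10} - (1/16) * entropy q {0,2,5,9,10}) + ((1/16) * entropy q {0,2,3,4,8,9,10} + (1/16) * entropy q {0,2,3,6,8,9,10} - (1/16) * entropy q {0,2,3,4,6,8,9,10} - (1/16) * entropy q {0,2,3,8,9,10}) + ((1/16) * entropy q {4,7,8,9,10} + (1/16) * entropy q {6,7,8,9,10} - (1/16) * entropy q {4,6,7,8,9,10} - (1/16) * entropy q {7,8,9,10}) + ((1/16) * entropy q {2,3,4,5,7,8,9,10} + (1/16) * entropy q {2,3,5,6,7,8,9,10} - (1/16) * entropy q {2,3,4,5,6,7,8,9,10} - (1/16) * entropy q {2,3,5,7,8,9,10}) + ((1/16) * entropy q {4} + (1/16) * entropy q {7} - (1/16) * entropy q {4,7}) + ((1/16) * entropy q {0,2,3,4,5,6,8,9,10} + (1/16) * entropy q {0,2,3,5,6,7,8,9,10} - (1/16) * entropy q {0,2,3,4,5,6,7,8,9,10} - (1/16) * entropy q {0,2,3,5,6,8,9,10}) + ((1/16) * entropy q {0,2,3,4,7} + (1/16) * entropy q {0,2,3,7,8} - (1/16) * entropy q {0,2,3,4,7,8} - (1/16) * entropy q {0,2,3,7}) + ((1/16) * entropy q {0,2,3,4,9,10} + (1/16) * entropy q {0,2,3,8,9,10} - (1/16) * entropy q {0,2,3,4,8,9,10} - (1/16) * entropy q {0,2,3,9,10}) + ((1/16) * entropy q {4,7} + (1/16) * entropy q {7,9,10} - (1/16) * entropy q {4,7,9,10} - (1/16) * entropy q {7}) + ((1/4) * entropy q {0,1,2,3,4,5,6,7,8}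 + (1/4) * entropy q {0,1,2,3,5,6,7,8,9,10} - (1/4) * entropy q {0,1,2,3,4,5,6,7,8,9,10} - (1/4) * entropy q {0,1,2,3,5,6,7,8}) + ((1/8) * entropy q {5} + (1/8) * entropy q {6} - (1/8) * entropy q {5,6}) + ((1/16) * entropy q {0,3,4,5,7,8,9,10} + (1/16) * entropy q {0,3,4,6,7,8,9,10} - (1/16) * entropy q {0,3,4,5,6,7,8,9,10} - (1/16) * entropy q {0,3,4,7,8,9,10}) + ((1/16) * entropy q {0,1,2,3,4,5,7,8,9,10} + (1/16) * entropy q {0,1,2,3,4,6,7,8,9,10} - (1/16) * entropy q {0,1,2,3,4,5,6,7,8,9,10} - (1/16) * entropy q {0,1,2,3,4,7,8,9,10}) + ((1/16) * entropy q {3,4,5} + (1/16) * entropy q {3,4,7} - (1/16) * entropy q {3,4,5,7} - (1/16) * entropy q {3,4}) + ((1/16) * entropy q {0,1,2,3,4,5,6,8,9,10} + (1/16) * entropy q {0,1,2,3,4,6,7,8,9,10} - (1/16) * entropy q {0,1,2,3,4,5,6,7,8,9,10} - (1/16) * entropy q {0,1,2,3,4,6,8,9,10}) + ((1/16) * entropy q {0,2,3,5,6} + (1/16) * entropy q {0,2,3,6,8} - (1/16) * entropy q {0,2,3,5,6,8} - (1/16) * entropy q {0,2,3,6}) + ((1/16) * entropy q {0,1,2,3,4,5,7,9,10} + (1/16) * entropy q {0,1,2,3,4,7,8,9,10} - (1/16) * entropy q {0,1,2,3,4,5,7,8,9,10} - (1/16) * entropy q {0,1,2,3,4,7,9,10})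 + ((1/8) * entropy q {0,2,5,7,8} + (1/8) * entropy q {0,2,7,8,9,10} - (1/8) * entropy q {0,2,5,7,8,9,10} - (1/8) * entropy q {0,2,7,8}) + ((1/16) * entropy q {0,1,2,3,4,5,7,8} + (1/16) * entropy q {0,1,2,3,4,7,8,9,10} - (1/16) * entropy q {0,1,2,3,4,5,7,8,9,10} - (1/16) * entropy q {0,1,2,3,4,7,8}) + ((1/16) * entropy q {0,1,3,4,5,6,7,8} + (1/16) * entropy q {0,1,3,4,6,7,8,9,10} - (1/16) * entropy q {0,1,3,4,5,6,7,8,9,10} - (1/16) * entropy q {0,1,3,4,6,7,8}) + ((1/16) * entropy q {6,8} + (1/16) * entropy q {7,8} - (1/16) * entropy q {6,7,8} - (1/16) * entropy q {8}) + ((1/16) * entropy q {0,2,4,5,6,9,10} + (1/16) * entropy q {0,2,4,5,7,9,10} - (1/16) * entropy q {0,2,4,5,6,7,9,10} - (1/16) * entropy q {0,2,4,5,9,10}) + ((1/16) * entropy q {2,3,6} + (1/16) * entropy q {2,3,8} - (1/16) * entropy q {2,3,6,8} - (1/16) * entropy q {2,3}) + ((1/16) * entropy q {0,1,2,3,4,5,6,7,9,10} + (1/16) * entropy q {0,1,2,3,4,5,7,8,9,10} - (1/16) * entropy q {0,1,2,3,4,5,6,7,8,9,10} - (1/16) * entropy q {0,1,2,3,4,5,7,9,10}) + ((1/16) * entropy q {0,1,2,3,4,6,7} + (1/16) * entropy q {0,1,2,3,4,7,9,10} - (1/16) * entropy q {0,1,2,3,4,6,7,9,10} - (1/16) * entropy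 q {0,1,2,3,4,7}) + ((1/8) * entropy q {0,2,5,6,7,8} + (1/8) * entropy q {0,2,5,7,8,9,10} - (1/8) * entropy q {0,2,5,6,7,8,9,10} - (1/8) * entropy q {0,2,5,7,8}) + ((1/16) * entropy q {0,1,2,3,4,5,6,7,8} + (1/16) * entropy q {0,1,2,3,4,5,7,8,9,10} - (1/16) * entropy q {0,1,2,3,4,5,6,7,8,9,10} - (1/16) * entropy q {0,1,2,3,4,5,7,8}) + ((1/16) * entropy q {2,7} + (1/16) * entropy q {2,9,10} - (1/16) * entropy q {2,7,9,10} - (1/16) * entropy q {2}) + ((1/16) * entropy q {3,4,7} + (1/16) * entropy q {3,4,9,10} - (1/16) * entropy q {3,4,7,9,10} - (1/16) * entropy q {3,4}) + ((1/16) * entropy q {0,3,4,5,7} + (1/16) * entropy q {0,3,4,5,9,10} - (1/16) * entropy q {0,3,4,5,7,9,10} - (1/16) * entropy q {0,3,4,5}) + ((1/16) * entropy q {0,3,6,7,8} + (1/16) * entropy q {0,3,6,8,9,10} - (1/16) * entropy q {0,3,6,7,8,9,10} - (1/16) * entropy q {0,3,6,8}) + ((1/8) * entropy q {5,6,7,8} + (1/8) * entropy q {5,6,8,9,10} - (1/8) * entropy q {5,6,7,8,9,10} - (1/8) * entropy q {5,6,8}) + ((1/8) * entropy q {5,6,8} + (1/8) * entropy q {5,6,9,10} - (1/8) * entropy q {5,6,8,9,10} - (1/8) * entropy q {5,6}) + ((1/16) * entropy q {0,2,3,5,6,8} + (1/16) * entropy q {0,2,3,5,6,9,10} - (1/16)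 * entropy q {0,2,3,5,6,8,9,10} - (1/16) * entropy q {0,2,3,5,6}) + ((1/8) * entropy q {3,4,7,8} + (1/8) * entropy q {3,4,7,9,10} - (1/8) * entropy q {3,4,7,8,9,10} - (1/8) * entropy q {3,4,7}) + ((1/16) * entropy q {0,1,2,3,4,6,7,8} + (1/16) * entropy q {0,1,2,3,4,6,7,9,10} - (1/16) * entropy q {0,1,2,3,4,6,7,8,9,10} - (1/16) * entropy q {0,1,2,3,4,6,7}) + ((1/16) * entropy q {0,2,3} - (1/16) * entropy q {2,3} - (1/16) * entropy q {0}) + ((1/16) * entropy q {0,2,4} - (1/16) * entropy q {2,4} - (1/16) * entropy q {0}) + ((3/8) * entropy q {2,3,4} - (3/8) * entropy q {0,2,3,4}) + ((1/16) * entropy q {0,2,3,6} - (1/16) * entropy q {2,3,6} - (1/16) * entropy q {0}) + ((1/16) * entropy q {0,2,3,7} - (1/16) * entropy q {2,3,7} - (1/16) * entropy q {0}) + ((3/8) * entropy q {2,5,6} - (3/8) * entropy q {0,2,5,6}) + ((1/8) * entropy q {0,2,7,8} - (1/8) * entropy q {2,7,8} - (1/8) * entropy q {0}) + ((1/16) * entropy q {0,3,4,5} - (1/16) * entropy q {3,4,5} - (1/16) * entropy q {0}) + ((1/16) * entropy q {0,3,6,8} - (1/16) * entropy q {3,6,8} - (1/16) * entropy q {0}) + ((1/16) * entropy q {2,3,6,8} - (1/16) * entropy q {0,2,3,6,8}) + ((1/16) * entropy q {2,3,7,8} - (1/16) * entropy q {0,2,3,7,8}) + ((3/8) * entropy q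 {0,3,4,5,6} - (3/8) * entropy q {3,4,5,6} - (3/8) * entropy q {0}) + ((1/16) * entropy q {3,4,5,7} - (1/16) * entropy q {0,3,4,5,7}) + ((1/16) * entropy q {3,4,5,8} - (1/16) * entropy q {0,3,4,5,8}) + ((1/8) * entropy q {0,3,4,7,8} - (1/8) * entropy q {3,4,7,8} - (1/8) * entropy q {0}) + ((1/8) * entropy q {3,6,7,8} - (1/8) * entropy q {0,3,6,7,8}) + ((1/8) * entropy q {0,5,6,7,8} - (1/8) * entropy q {5,6,7,8} - (1/8) * entropy q {0}) + ((1/16) * entropy q {3,9,10} - (1/16) * entropy q {0,2,3}) + ((1/16) * entropy q {4,9,10} - (1/16) * entropy q {0,2,4}) + ((1/4) * entropy q {0,2,3,4} - (1/4) * entropy q {3,4,9,10}) + ((1/4) * entropy q {0,2,5,6} - (1/4) * entropy q {5,6,9,10}) + ((3/8) * entropy q {3,4,5,6,9,10} - (3/8) * entropy q {0,2,3,4,5,6}) + ((3/8) * entropy q {0,1,2,3,4,5,6,7,8,9,10} + (3/8) * entropy q {3,4,5,6} - (3/8) * entropy q {0,1,2,3,4,5,6,7,8} - (3/8) * entropy q {3,4,5,6,9,10})"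
    by (intro add_nonneg_nonneg G1 G2 G3 G4 G5 G6 G7 G8 G9 G10 G11 G12 G13 G14 G15 G16 G17 G18 G19 G20 G21 G22 G23 G24 G25 G26 G27 G28 G29 G30 G31 G32 G33 G34 G35 G36 G37 G38 G39 G40 G41 G42 G43 G44 G45 G46 G47 G48 G49 G50 G51 G52 G53 G54 G55 G56 G57 G58 G59 G60 G61 G62 G63 G64 G65 G66 G67 G68 G69 G70 G71 G72 G73 G74 G75 G76 G77 G78 G79 G80 G81 G82 G83 G84 G85 G86 G87 G88 G89 G90 G91 G92 G93 G94 G95 G96 G97 G98 G99 G100 G101 G102 G103 G104 G105 G106 G107 G108 G109 G110 G111 G112 G113 G114 G115 G116 G117 G118 G119 G120 G121 G122 G123 G124 G125 G126 G127 G128 G129 G130 G131 G132 G133)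

  have T: "0 \<le> (1/2) * entropy q {2} + (1/8) * entropy q {3} + (1/8) * entropy q {4} + (1/8) * entropy q {5} + (1/8) * entropy q {6} - (9/8) * entropy q {0}"
    using S by linarith
  moreover have "entropy q {0} = entropy p {0}" "entropy q {2} = entropy p {2}" "entropy q {3} = entropy p {3}"
    "entropy q {4} = entropy p {4}" "entropy q {5} = entropy p {5}" "entropy q {6} = entropy p {6}"
    by (auto intro!: E1)
  ultimately show ?thesis by linarith
qed


lemma rate_bound:
  fixes p :: "(nat \<Rightarrow> 'v) pmf"
  assumes ss: "ss_scheme p 0 vQ V1" and pos: "entropy p {0} > 0"
  shows "scheme_rate p 0 vQ \<le> ereal (19/21)"
proof -
  have mb: "9 * entropy p {0} \<le> 4 * entropy p {2} + entropy p {3} + entropy p {4} + entropy p {5} + entropy p {6}"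
    by (rule main_bound[OF ss])
  have ex: "\<exists>x\<in>{2,3,4,5,6::nat}. 9 * entropy p {0} \<le> 8 * entropy p {x}"
  proof (rule ccontr)
    assume "\<not> ?thesis"
    then have "8 * entropy p {2} < 9 * entropy p {0}" "8 * entropy p {3} < 9 * entropy p {0}"
      "8 * entropy p {4} < 9 * entropy p {0}" "8 * entropy p {5} < 9 * entropy p {0}"
      "8 * entropy p {6} < 9 * entropy p {0}" by (auto simp: not_le)
    then show False using mb by linarith
  qed
  then obtain x where x: "x \<in> {2,3,4,5,6::nat}" "9 * entropy p {0} \<le> 8 * entropy p {x}" by blast
  have xQ: "x \<in> vQ" using x(1) by (auto simp: vQ_def)
  have Hx: "entropy p {x} > 0" using x(2) pos by linarith
  have "entropy p {0} / entropy p {x} \<le> 19/21"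
    using Hx x(2) by (simp add: divide_le_eq)
  then have "(if entropy p {x} = 0 then \<infinity> else ereal (entropy p {0} / entropy p {x})) \<le> ereal (19/21)"
    using Hx by simp
  then show ?thesis unfolding scheme_rate_def by (rule INF_lower2[OF xQ])
qed

theorem mainTheorem2:
  shows "(\<forall>p :: (nat \<Rightarrow> 'v) pmf. ss_scheme p 0 vQ V1 \<and> entropy p {0} > 0
            \<longrightarrow> scheme_rate p 0 vQ \<le> ereal (19/21))
         \<and> access_rate 0 vQ V1 \<le> ereal (19/21)"
proof
  show "\<forall>p :: (nat \<Rightarrow> 'v) pmf. ss_scheme p 0 vQ V1 \<and> entropy p {0} > 0
            \<longrightarrow> scheme_rate p 0 vQ \<le> ereal (19/21)"
    using rate_bound by blast
  show "access_rate 0 vQ V1 \<le> ereal (19/21)"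
    unfolding access_rate_def by (rule SUP_least) (auto intro: rate_bound)
qed

end
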